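(* Let $\mathcal{G}=(\mathcal{V},\mathcal{E})$ be a digraph on $n>1$ nodes and fix updating weights $a_{ij}$ and sending weights $b_{ih}$ as described in the context. Then $\mathcal{G}$ is strongly connected if and only if there exists $\bar\epsilon>0$ such that for every $\epsilon\in(0,\bar\epsilon)$ the deterministic algorithm with parameter $\epsilon$ achieves average consensus.
   Context: Setting: $\mathcal{V}=\{1,\dots,n\}$ with $n>1$, $\mathcal{E}\subseteq\mathcal{V}\times\mathcal{V}$, and no selfloops, i.e. $(i,i)\notin\mathcal{E}$. An edge $(j,i)$ means that $j$ sends information to $i$. Write $\mathcal{N}_i^+=\{j:(j,i)\in\mathcal{E}\}$ and $\mathcal{N}_i^-=\{h:(i,h)\in\mathcal{E}\}$. Weights: the updating weights satisfy $a_{ij}\in(0,1)$ if $j\in\mathcal{N}_i^+$, $a_{ij}=0$ otherwise, and $\sum_{j\in\mathcal{N}_i^+}a_{ij}<1$. The sending weights satisfy $b_{ih}\in(0,1)$ if $h\in\mathcal{N}_i^-$, $b_{ih}=0$ otherwise, and $\sum_{h\in\mathcal{N}_i^-}b_{ih}<1$. Matrices: let $A=[a_{ij}]$, $D=\mathrm{diag}(d_1,\dots,d_n)$ with $d_i=\sum_j a_{ij}$, and $L=D-A$. Let $B=[b_{ih}]^T$ (so the $(h,i)$ entry of $B$ is $b_{ih}$), $\tilde D=\mathrm{diag}(\tilde d_1,\dots,\tilde d_n)$ with $\tilde d_i=\sum_h b_{ih}$, and $S=(I-\tilde D)+B$. For a parameter $\epsilon>0$ define $$M=\begin{bmatrix}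 I-L & \epsilon I\\ L & S-\epsilon I\end{bmatrix}\in\mathbb{R}^{2n\times 2n}.$$ Deterministic algorithm: state $x(k)\in\mathbb{R}^n$ and surplus $s(k)\in\mathbb{R}^n$ evolve by $\begin{bmatrix}x(k+1)\\ s(k+1)\end{bmatrix}=M\begin{bmatrix}x(k)\\ s(k)\end{bmatrix}$ for $k\ge 0$, starting from $s(0)=0$. Average consensus: the algorithm achieves average consensus if for every $x(0)\in\mathbb{R}^n$ (with $s(0)=0$) we have $(x(k),s(k))\to(x_a\mathbf{1},0)$ as $k\to\infty$, where $x_a=\mathbf{1}^Tx(0)/n$ and $\mathbf{1}$ is the all-ones vector. *)

theory Defs
  imports "HOL-Analysis.Analysis"
begin

text \<open>Nodes are the elements of a finite type 'n (n = CARD('n)). An edge (j,i) in E means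
 j sends information to i. Weights: a i j = a_ij (updating), b i h = b_ih (sending).\<close>

definition in_nbrs :: "('n \<times> 'n) set \<Rightarrow> 'n \<Rightarrow> 'n set" where
  "in_nbrs E i = {j. (j, i) \<in> E}"

definition out_nbrs :: "('n \<times> 'n) set \<Rightarrow> 'n \<Rightarrow> 'n set" where
  "out_nbrs E i = {h. (i, h) \<in> E}"

definition valid_weights ::
  "('n::finite \<times> 'n) set \<Rightarrow> ('n \<Rightarrow> 'n \<Rightarrow> real) \<Rightarrow> ('n \<Rightarrow> 'n \<Rightarrow> real) \<Rightarrow> bool" where
  "valid_weights E a b \<longleftrightarrow>
     (\<forall>i j. j \<in> in_nbrs E i \<longrightarrow> 0 < a i j \<and> a i j < 1) \<and>
     (\<forall>i j. j \<notin> in_nbrs E i \<longrightarrow> a i j = 0) \<and>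
     (\<forall>i. (\<Sum>j\<in>in_nbrs E i. a i j) < 1) \<and>
     (\<forall>i h. h \<in> out_nbrs E i \<longrightarrow> 0 < b i h \<and> b i h < 1) \<and>
     (\<forall>i h. h \<notin> out_nbrs E i \<longrightarrow> b i h = 0) \<and>
     (\<forall>i. (\<Sum>h\<in>out_nbrs E i. b i h) < 1)"

definition lapl :: "('n::finite \<Rightarrow> 'n \<Rightarrow> real) \<Rightarrow> real^'n^'n" where
  "lapl a = (\<chi> i j. (if i = j then (\<Sum>k\<in>UNIV. a i k) else 0) - a i j)"

definition Smat :: "('n::finite \<Rightarrow> 'n \<Rightarrow> real) \<Rightarrow> real^'n^'n" where
  "Smat b = (\<chi> h i. (if h = i then 1 - (\<Sum>k\<in>UNIV. b i k) else 0) + b i h)"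

text \<open>The 2n x 2n block matrix M, indexed by 'n + 'n (Inl = x-block, Inr = s-block).\<close>
definition Mmat :: "('n::finite \<Rightarrow> 'n \<Rightarrow> real) \<Rightarrow> ('n \<Rightarrow> 'n \<Rightarrow> real) \<Rightarrow> real
    \<Rightarrow> real^('n + 'n)^('n + 'n)" where
  "Mmat a b \<epsilon> = (\<chi> p q. case (p, q) of
      (Inl i, Inl j) \<Rightarrow> (mat 1 - lapl a) $ i $ j
    | (Inl i, Inr j) \<Rightarrow> (\<epsilon> *\<^sub>R (mat 1 :: real^'n^'n)) $ i $ j
    | (Inr i, Inl j) \<Rightarrow> lapl a $ i $ j
    | (Inr i, Inr j) \<Rightarrow> (Smat b - \<epsilon> *\<^sub>R mat 1) $ i $ j)"

definition stack :: "real^'n \<Rightarrow> real^'n \<Rightarrow> real^('n::finite + 'n)" where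
  "stack x s = (\<chi> p. case p of Inl i \<Rightarrow> x $ i | Inr i \<Rightarrow> s $ i)"

primrec traj :: "real^'m^'m \<Rightarrow> real^'m \<Rightarrow> nat \<Rightarrow> real^'m::finite" where
  "traj M z0 0 = z0"
| "traj M z0 (Suc k) = M *v traj M z0 k"

definition average_consensus ::
  "('n::finite \<Rightarrow> 'n \<Rightarrow> real) \<Rightarrow> ('n \<Rightarrow> 'n \<Rightarrow> real) \<Rightarrow> real \<Rightarrow> bool" where
  "average_consensus a b \<epsilon> \<longleftrightarrow>
     (\<forall>x0 :: real^'n.
        traj (Mmat a b \<epsilon>) (stack x0 0) \<longlonglongrightarrow>
          stack (((\<Sum>i\<in>UNIV. x0 $ i) / real CARD('n)) *\<^sub>R 1) 0)"

definition strongly_connected :: "('n \<times> 'n) set \<Rightarrow> bool" where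
  "strongly_connected E \<longleftrightarrow> (\<forall>i j. (i, j) \<in> E\<^sup>*)"

end

theory Submission imports Defs begin


definition mv :: "('n::finite \<Rightarrow> 'n \<Rightarrow> real) \<Rightarrow> ('n \<Rightarrow> real) \<Rightarrow> 'n \<Rightarrow> real" where
  "mv Q x i = (\<Sum>j\<in>UNIV. Q i j * x j)"

definition uvec :: "'n \<Rightarrow> 'n \<Rightarrow> real" where
  "uvec j i = (if i = j then 1 else 0)"

definition n1 :: "('n::finite \<Rightarrow> real) \<Rightarrow> real" where
  "n1 y = (\<Sum>i\<in>UNIV. \<bar>y i\<bar>)"

definition osc :: "('n::finite \<Rightarrow> real) \<Rightarrow> real" where
  "osc x = Max (range x) - Min (range x)"

lemma mv_Suc: "(mv Q ^^ Suc k) x i = (\<Sum>j\<in>UNIV. Q i j * (mv Q ^^ k) x j)"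
  by (simp only: funpow.simps comp_apply mv_def)

lemma mv_add: "mv Q (\<lambda>i. x i + y i) = (\<lambda>i. mv Q x i + mv Q y i)"
  by (rule ext) (simp add: mv_def distrib_left sum.distrib)
lemma mv_diff: "mv Q (\<lambda>i. x i - y i) = (\<lambda>i. mv Q x i - mv Q y i)"
  by (rule ext) (simp add: mv_def right_diff_distrib sum_subtractf)
lemma mv_scale: "mv Q (\<lambda>i. c * x i) = (\<lambda>i. c * mv Q x i)"
  by (rule ext) (simp add: mv_def sum_distrib_left mult.left_commute)

lemma it_add: "(mv Q ^^ k) (\<lambda>i. x i + y i) = (\<lambda>i. (mv Q ^^ k) x i + (mv Q ^^ k) y i)"
  by (induction k) (simp_all add: mv_add)
lemma it_diff: "(mv Q ^^ k) (\<lambda>i. x i - y i) = (\<lambda>i. (mv Q ^^ k) x i - (mv Q ^^ k) y i)"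
  by (induction k) (simp_all add: mv_diff)
lemma it_scale: "(mv Q ^^ k) (\<lambda>i. c * x i) = (\<lambda>i. c * (mv Q ^^ k) x i)"
  by (induction k) (simp_all add: mv_scale)

lemma it_lin: "(mv Q ^^ k) y i = (\<Sum>j\<in>UNIV. y j * (mv Q ^^ k) (uvec j) i)"
proof (induction k arbitrary: i)
  case 0
  then show ?case by (simp add: uvec_def if_distrib[where f="\<lambda>t. y _ * t"] cong: if_cong)
next
  case (Suc k)
  have e: "(mv Q ^^ k) y = (\<lambda>l. \<Sum>j\<in>UNIV. y j * (mv Q ^^ k) (uvec j) l)"
    using Suc.IH by auto
  have "(mv Q ^^ Suc k) y i = (\<Sum>l\<in>UNIV. Q i l * (\<Sum>j\<in>UNIV. y j * (mv Q ^^ k) (uvec j) l))"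
    by (simp only: funpow.simps comp_apply e mv_def)
  also have "\<dots> = (\<Sum>j\<in>UNIV. y j * (\<Sum>l\<in>UNIV. Q i l * (mv Q ^^ k) (uvec j) l))"
    by (simp add: sum_distrib_left mult.left_commute) (rule sum.swap)
  also have "\<dots> = (\<Sum>j\<in>UNIV. y j * (mv Q ^^ Suc k) (uvec j) i)"
    by (simp add: mv_def)
  finally show ?case .
qed

lemma it_nonneg: assumes "\<And>i j. Q i j \<ge> 0" "\<And>l. x l \<ge> 0"
  shows "(mv Q ^^ k) x i \<ge> 0"
  using assms(2) by (induction k arbitrary: i) (auto simp: mv_def assms(1) intro!: sum_nonneg)

lemma walk_bound:
  assumes nn: "\<And>i j. Q i j \<ge> 0" and dg: "\<And>i. Q i i \<ge> \<delta>"
    and ed: "\<And>i j. (j, i) \<in> R \<Longrightarrow> Q i j \<ge> \<delta>" and d0: "\<delta> \<ge> 0"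
    and x0: "\<And>l. x l \<ge> 0"
  shows "(j, i) \<in> (R \<union> Id) ^^ k \<Longrightarrow> (mv Q ^^ k) x i \<ge> \<delta> ^ k * x j"
proof (induction k arbitrary: i)
  case 0
  then show ?case by simp
next
  case (Suc k)
  from Suc.prems obtain l where l1: "(j, l) \<in> (R \<union> Id) ^^ k" and l2: "(l, i) \<in> R \<union> Id"
    by (auto elim: relpow_Suc_E)
  have Qil: "Q i l \<ge> \<delta>" using l2 dg ed by auto
  let ?y = "(mv Q ^^ k) x"
  have yn: "\<And>m. ?y m \<ge> 0" using it_nonneg[OF nn x0] .
  have "Q i l * ?y l \<le> (\<Sum>m\<in>UNIV. Q i m * ?y m)"
    by (rule member_le_sum) (auto intro: mult_nonneg_nonneg nn yn)
  moreover have "\<delta> * (\<delta> ^ k * x j) \<le> Q i l * ?y l"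
    using Suc.IH[OF l1] Qil d0 x0 yn by (intro mult_mono) auto
  moreover have "\<delta> ^ Suc k * x j = \<delta> * (\<delta> ^ k * x j)" by simp
  ultimately show ?case unfolding mv_Suc by linarith
qed

lemma relpow_Id_mono: "p \<in> R ^^ k \<Longrightarrow> p \<in> (R \<union> Id) ^^ k"
proof (induction k arbitrary: p)
  case 0 then show ?case by simp
next
  case (Suc k)
  then obtain x z y where "p = (x, z)" "(x, y) \<in> R ^^ k" "(y, z) \<in> R"
    by (metis relpow_Suc_E surj_pair)
  then show ?case using Suc.IH by (auto intro: relpow_Suc_I)
qed

lemma Id_relpow: "(i, i) \<in> (R \<union> Id) ^^ m"
  by (induction m) (auto intro: relpow_Suc_I)

lemma relpow_pad: assumes "p \<in> (R \<union> Id) ^^ k" "k \<le> K" shows "p \<in> (R \<union> Id) ^^ K"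
proof -
  obtain m where K: "K = k + m" using assms(2) le_Suc_ex by blast
  obtain a b where p: "p = (a, b)" by fastforce
  have "(b, b) \<in> (R \<union> Id) ^^ m" by (rule Id_relpow)
  then show ?thesis using assms(1) unfolding K relpow_add p by blast
qed

lemma pos_power:
  assumes nn: "\<And>i j. Q i j \<ge> 0" and dg: "\<And>i. Q i i \<ge> \<delta>"
    and ed: "\<And>i j. (j, i) \<in> R \<Longrightarrow> Q i j \<ge> \<delta>" and d0: "\<delta> > 0"
    and conn: "\<And>i j. (i, j) \<in> R\<^sup>*"
  shows "\<exists>K \<eta>. 0 < K \<and> 0 < \<eta> \<and> (\<forall>i j. (mv Q ^^ K) (uvec j) i \<ge> \<eta>)"
proof -
  define kf :: "'a \<times> 'a \<Rightarrow> nat" where "kf p = (SOME k. p \<in> R ^^ k)" for p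
  have kf: "p \<in> R ^^ (kf p)" for p
    unfolding kf_def by (rule someI_ex) (metis conn rtrancl_power surj_pair)
  define K where "K = Suc (Max (range kf))"
  have "kf p \<le> K" for p unfolding K_def by (simp add: le_SucI)
  then have rK: "p \<in> (R \<union> Id) ^^ K" for p using kf relpow_Id_mono relpow_pad by blast
  have "(mv Q ^^ K) (uvec j) i \<ge> \<delta> ^ K" for i j
  proof -
    have "\<delta> ^ K * uvec j j \<le> (mv Q ^^ K) (uvec j) i"
      by (rule walk_bound[of Q \<delta> R]) (use nn dg ed d0 rK in \<open>auto simp: uvec_def\<close>)
    then show ?thesis by (simp add: uvec_def)
  qed
  then show ?thesis using d0 by (intro exI[of _ K] exI[of _ "\<delta> ^ K"]) (auto simp: K_def)
qed

lemma fin_range: "finite (range (x::'n::finite \<Rightarrow> real))" by simp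

lemma le_Max_r: "x i \<le> Max (range (x::'n::finite \<Rightarrow> real))"
  by (rule Max_ge) auto
lemma Min_le_r: "Min (range (x::'n::finite \<Rightarrow> real)) \<le> x i"
  by (rule Min_le) auto
lemma Max_r_in: "\<exists>i. x i = Max (range (x::'n::finite \<Rightarrow> real))"
proof -
  have "Max (range x) \<in> range x" by (rule Max_in) auto
  then show ?thesis by (metis rangeE)
qed
lemma Min_r_in: "\<exists>i. x i = Min (range (x::'n::finite \<Rightarrow> real))"
proof -
  have "Min (range x) \<in> range x" by (rule Min_in) auto
  then show ?thesis by (metis rangeE)
qed

lemma diff_le_osc: "x i - x i' \<le> osc x"
  unfolding osc_def using le_Max_r[of x i] Min_le_r[of x i'] by linarith

lemma osc_le: assumes "\<And>i i'. x i - x i' \<le> B" shows "osc x \<le> B"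
proof -
  obtain i i' where "x i = Max (range x)" "x i' = Min (range x)" using Max_r_in Min_r_in by metis
  then show ?thesis unfolding osc_def using assms[of i i'] by linarith
qed

lemma osc_nonneg: "osc x \<ge> 0"
  using diff_le_osc[of x undefined undefined] by simp

lemma osc_add: "osc (\<lambda>i. x i + y i) \<le> osc x + osc y"
proof (rule osc_le)
  fix i i' show "x i + y i - (x i' + y i') \<le> osc x + osc y"
    using diff_le_osc[of x i i'] diff_le_osc[of y i i'] by linarith
qed
lemma osc_diff: "osc (\<lambda>i. x i - y i) \<le> osc x + osc y"
proof (rule osc_le)
  fix i i' show "x i - y i - (x i' - y i') \<le> osc x + osc y"
    using diff_le_osc[of x i i'] diff_le_osc[of y i' i] by linarith
qed
lemma osc_scale: "osc (\<lambda>i. c * x i) = \<bar>c\<bar> * osc x"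
proof (rule antisym)
  show "osc (\<lambda>i. c * x i) \<le> \<bar>c\<bar> * osc x"
  proof (rule osc_le)
    fix i i'
    have "c * x i - c * x i' = c * (x i - x i')" by (simp add: algebra_simps)
    also have "\<dots> \<le> \<bar>c\<bar> * osc x"
    proof (cases "c \<ge> 0")
      case True then show ?thesis using diff_le_osc[of x i i'] by (simp add: mult_left_mono)
    next
      case False
      then have "c * (x i - x i') = \<bar>c\<bar> * (x i' - x i)" by (simp add: algebra_simps)
      then show ?thesis using diff_le_osc[of x i' i] by (simp add: mult_left_mono)
    qed
    finally show "c * x i - c * x i' \<le> \<bar>c\<bar> * osc x" .
  qed
next
  show "\<bar>c\<bar> * osc x \<le> osc (\<lambda>i. c * x i)"
  proof (cases "c = 0")
    case True then show ?thesis using osc_nonneg by simp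
  next
    case False
    have "osc x \<le> osc (\<lambda>i. c * x i) / \<bar>c\<bar>"
    proof (rule osc_le)
      fix i i'
      have "\<bar>c\<bar> * (x i - x i') \<le> osc (\<lambda>i. c * x i)"
      proof (cases "c \<ge> 0")
        case True then show ?thesis using diff_le_osc[of "\<lambda>i. c * x i" i i'] by (simp add: algebra_simps)
      next
        case False then show ?thesis using diff_le_osc[of "\<lambda>i. c * x i" i' i] by (simp add: algebra_simps)
      qed
      then show "x i - x i' \<le> osc (\<lambda>i. c * x i) / \<bar>c\<bar>" using False
        by (simp add: field_simps)
    qed
    then show ?thesis using False by (simp add: field_simps)
  qed
qed

lemma osc_const_add: "osc (\<lambda>i. x i + c) = osc x"
proof (rule antisym)
  show "osc (\<lambda>i. x i + c) \<le> osc x"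
  proof (rule osc_le)
    fix i i' show "x i + c - (x i' + c) \<le> osc x" using diff_le_osc[of x i i'] by linarith
  qed
  show "osc x \<le> osc (\<lambda>i. x i + c)"
  proof (rule osc_le)
    fix i i' show "x i - x i' \<le> osc (\<lambda>i. x i + c)" using diff_le_osc[of "\<lambda>i. x i + c" i i'] by simp
  qed
qed

lemma abs_le_2n1: "\<bar>y i\<bar> \<le> n1 y"
  unfolding n1_def by (rule member_le_sum) auto

lemma osc_le_n1: "osc y \<le> 2 * n1 y"
proof (rule osc_le)
  fix i i' show "y i - y i' \<le> 2 * n1 y" using abs_le_2n1[of y i] abs_le_2n1[of y i'] by linarith
qed

lemma n1_nonneg: "n1 y \<ge> 0" unfolding n1_def by (simp add: sum_nonneg)
lemma n1_add: "n1 (\<lambda>i. x i + y i) \<le> n1 x + n1 y"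
  unfolding n1_def sum.distrib[symmetric] by (rule sum_mono) (rule abs_triangle_ineq)
lemma n1_diff: "n1 (\<lambda>i. x i - y i) \<le> n1 x + n1 y"
  unfolding n1_def sum.distrib[symmetric] by (rule sum_mono) (rule abs_triangle_ineq4)
lemma n1_scale: "n1 (\<lambda>i. c * x i) = \<bar>c\<bar> * n1 x"
  unfolding n1_def by (simp add: abs_mult sum_distrib_left)

section \<open>Row stochastic\<close>

lemma mv_le_Max: assumes nn: "\<And>i j. Q i j \<ge> 0" and rs: "\<And>i. (\<Sum>j\<in>UNIV. Q i j) = 1"
  shows "mv Q x i \<le> Max (range x)"
proof -
  have "mv Q x i \<le> (\<Sum>j\<in>UNIV. Q i j * Max (range x))"
    unfolding mv_def by (rule sum_mono) (simp add: mult_left_mono nn le_Max_r)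
  also have "\<dots> = Max (range x)" using rs by (simp add: sum_distrib_right[symmetric])
  finally show ?thesis .
qed

lemma mv_ge_Min: assumes nn: "\<And>i j. Q i j \<ge> 0" and rs: "\<And>i. (\<Sum>j\<in>UNIV. Q i j) = 1"
  shows "Min (range x) \<le> mv Q x i"
proof -
  have "(\<Sum>j\<in>UNIV. Q i j * Min (range x)) \<le> mv Q x i"
    unfolding mv_def by (rule sum_mono) (simp add: mult_left_mono nn Min_le_r)
  moreover have "(\<Sum>j\<in>UNIV. Q i j * Min (range x)) = Min (range x)" using rs by (simp add: sum_distrib_right[symmetric])
  ultimately show ?thesis by simp
qed

lemma osc_mv: assumes nn: "\<And>i j. Q i j \<ge> 0" and rs: "\<And>i. (\<Sum>j\<in>UNIV. Q i j) = 1"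
  shows "osc (mv Q x) \<le> osc x"
proof (rule osc_le)
  fix i i' show "mv Q x i - mv Q x i' \<le> osc x"
    unfolding osc_def using mv_le_Max[where Q=Q, OF nn rs, where x=x and i=i] mv_ge_Min[where Q=Q, OF nn rs, where x=x and i=i'] by linarith
qed

lemma osc_it: assumes nn: "\<And>i j. Q i j \<ge> 0" and rs: "\<And>i. (\<Sum>j\<in>UNIV. Q i j) = 1"
  shows "osc ((mv Q ^^ k) x) \<le> osc x"
  by (induction k) (auto intro: order_trans[OF osc_mv[where Q=Q, OF nn rs]])

lemma osc_G:
  fixes G :: "'n::finite \<Rightarrow> 'n \<Rightarrow> real"
  assumes rs: "\<And>i. (\<Sum>j\<in>UNIV. G i j) = 1" and ge: "\<And>i j. G i j \<ge> \<eta>"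
  shows "osc (\<lambda>i. \<Sum>j\<in>UNIV. G i j * x j) \<le> (1 - real CARD('n) * \<eta>) * osc (x::'n::finite \<Rightarrow> real)"
proof -
  let ?M = "Max (range x)" and ?m = "Min (range x)" and ?n = "real CARD('n)"
  have split: "(\<Sum>j\<in>UNIV. G i j * x j) = (\<Sum>j\<in>UNIV. (G i j - \<eta>) * x j) + \<eta> * sum x UNIV" for i
    by (simp add: left_diff_distrib sum_subtractf sum_distrib_left)
  have up: "(\<Sum>j\<in>UNIV. (G i j - \<eta>) * x j) \<le> (1 - ?n * \<eta>) * ?M" for i
  proof -
    have "(\<Sum>j\<in>UNIV. (G i j - \<eta>) * x j) \<le> (\<Sum>j\<in>UNIV. (G i j - \<eta>) * ?M)"
      by (rule sum_mono) (simp add: mult_left_mono ge le_Max_r)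
    also have "\<dots> = (1 - ?n * \<eta>) * ?M" using rs[of i]
      by (simp add: sum_distrib_right[symmetric] sum_subtractf)
    finally show ?thesis .
  qed
  have lo: "(1 - ?n * \<eta>) * ?m \<le> (\<Sum>j\<in>UNIV. (G i j - \<eta>) * x j)" for i
  proof -
    have "(\<Sum>j\<in>UNIV. (G i j - \<eta>) * ?m) \<le> (\<Sum>j\<in>UNIV. (G i j - \<eta>) * x j)"
      by (rule sum_mono) (simp add: mult_left_mono ge Min_le_r)
    moreover have "(\<Sum>j\<in>UNIV. (G i j - \<eta>) * ?m) = (1 - ?n * \<eta>) * ?m" using rs[of i]
      by (simp add: sum_distrib_right[symmetric] sum_subtractf)
    ultimately show ?thesis by simp
  qed
  show ?thesis
  proof (rule osc_le)
    fix i i'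
    show "(\<Sum>j\<in>UNIV. G i j * x j) - (\<Sum>j\<in>UNIV. G i' j * x j) \<le> (1 - ?n * \<eta>) * osc x"
      using up[of i] lo[of i'] split[of i] split[of i'] unfolding osc_def
      by (simp add: right_diff_distrib)
  qed
qed

section \<open>Column stochastic\<close>

lemma n1_mv: assumes nn: "\<And>i j. Q i j \<ge> 0" and cs: "\<And>j. (\<Sum>i\<in>UNIV. Q i j) = 1"
  shows "n1 (mv Q y) \<le> n1 y"
proof -
  have "n1 (mv Q y) \<le> (\<Sum>i\<in>UNIV. \<Sum>j\<in>UNIV. Q i j * \<bar>y j\<bar>)"
    unfolding n1_def mv_def
    by (rule sum_mono) (rule order_trans[OF sum_abs], simp add: abs_mult nn)
  also have "\<dots> = (\<Sum>j\<in>UNIV. (\<Sum>i\<in>UNIV. Q i j) * \<bar>y j\<bar>)"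
    by (subst sum.swap) (simp add: sum_distrib_right)
  also have "\<dots> = n1 y" using cs by (simp add: n1_def)
  finally show ?thesis .
qed

lemma sum_mv: assumes cs: "\<And>j. (\<Sum>i\<in>UNIV. Q i j) = 1"
  shows "sum (mv Q y) UNIV = sum y UNIV"
proof -
  have "sum (mv Q y) UNIV = (\<Sum>j\<in>UNIV. (\<Sum>i\<in>UNIV. Q i j) * y j)"
    unfolding mv_def by (subst sum.swap) (simp add: sum_distrib_right)
  then show ?thesis using cs by simp
qed

lemma n1_G:
  fixes G :: "'n::finite \<Rightarrow> 'n \<Rightarrow> real"
  assumes cs: "\<And>j. (\<Sum>i\<in>UNIV. G i j) = 1" and ge: "\<And>i j. G i j \<ge> \<eta>"
    and z: "sum y UNIV = 0"
  shows "n1 (\<lambda>i. \<Sum>j\<in>UNIV. G i j * y j) \<le> (1 - real CARD('n) * \<eta>) * n1 (y::'n::finite \<Rightarrow> real)"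
proof -
  have e: "(\<Sum>j\<in>UNIV. G i j * y j) = (\<Sum>j\<in>UNIV. (G i j - \<eta>) * y j)" for i
    using z by (simp add: algebra_simps sum_subtractf sum_distrib_left[symmetric])
  have "n1 (\<lambda>i. \<Sum>j\<in>UNIV. G i j * y j) \<le> (\<Sum>i\<in>UNIV. \<Sum>j\<in>UNIV. (G i j - \<eta>) * \<bar>y j\<bar>)"
    unfolding n1_def e
    by (rule sum_mono) (rule order_trans[OF sum_abs], simp add: abs_mult ge)
  also have "\<dots> = (\<Sum>j\<in>UNIV. (\<Sum>i\<in>UNIV. (G i j - \<eta>)) * \<bar>y j\<bar>)"
    by (subst sum.swap) (simp add: sum_distrib_right)
  also have "\<dots> = (1 - real CARD('n) * \<eta>) * n1 y" using cs
    by (simp add: n1_def sum_subtractf sum_distrib_left)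
  finally show ?thesis .
qed

section \<open>Lyapunov measures\<close>

definition NP :: "('n::finite \<Rightarrow> 'n \<Rightarrow> real) \<Rightarrow> nat \<Rightarrow> ('n \<Rightarrow> real) \<Rightarrow> real" where
  "NP Q K x = (\<Sum>k<K. osc ((mv Q ^^ k) x))"

definition NS :: "('n::finite \<Rightarrow> 'n \<Rightarrow> real) \<Rightarrow> nat \<Rightarrow> ('n \<Rightarrow> real) \<Rightarrow> real" where
  "NS Q K x = (\<Sum>k<K. n1 ((mv Q ^^ k) x))"

lemma it_Suc_right: "(mv Q ^^ k) (mv Q x) = (mv Q ^^ Suc k) x"
  by (simp only: funpow_Suc_right comp_apply)

lemma sum_shift: "(\<Sum>k<K. f (Suc k)) = (\<Sum>k<K. f k) - f 0 + (f K :: real)"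
  using sum.lessThan_Suc_shift[of f K] sum.lessThan_Suc[of f K] by simp

lemma NP_nonneg: "NP Q K x \<ge> 0" unfolding NP_def by (simp add: sum_nonneg osc_nonneg)
lemma NS_nonneg: "NS Q K x \<ge> 0" unfolding NS_def by (simp add: sum_nonneg n1_nonneg)

lemma NP_ge: "0 < K \<Longrightarrow> osc x \<le> NP Q K x"
  unfolding NP_def using member_le_sum[of 0 "{..<K}" "\<lambda>k. osc ((mv Q ^^ k) x)"]
  by (simp add: osc_nonneg)
lemma NS_ge: "0 < K \<Longrightarrow> n1 x \<le> NS Q K x"
  unfolding NS_def using member_le_sum[of 0 "{..<K}" "\<lambda>k. n1 ((mv Q ^^ k) x)"]
  by (simp add: n1_nonneg)

lemma NP_add: "NP Q K (\<lambda>i. x i + y i) \<le> NP Q K x + NP Q K y"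
  unfolding NP_def it_add sum.distrib[symmetric] by (rule sum_mono) (rule osc_add)
lemma NP_diff: "NP Q K (\<lambda>i. x i - y i) \<le> NP Q K x + NP Q K y"
  unfolding NP_def it_diff sum.distrib[symmetric] by (rule sum_mono) (rule osc_diff)
lemma NP_scale: "NP Q K (\<lambda>i. c * x i) = \<bar>c\<bar> * NP Q K x"
  unfolding NP_def it_scale osc_scale by (simp add: sum_distrib_left)
lemma NS_add: "NS Q K (\<lambda>i. x i + y i) \<le> NS Q K x + NS Q K y"
  unfolding NS_def it_add sum.distrib[symmetric] by (rule sum_mono) (rule n1_add)
lemma NS_diff: "NS Q K (\<lambda>i. x i - y i) \<le> NS Q K x + NS Q K y"
  unfolding NS_def it_diff sum.distrib[symmetric] by (rule sum_mono) (rule n1_diff)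
lemma NS_scale: "NS Q K (\<lambda>i. c * x i) = \<bar>c\<bar> * NS Q K x"
  unfolding NS_def it_scale n1_scale by (simp add: sum_distrib_left)

lemma mv_const: assumes rs: "\<And>i. (\<Sum>j\<in>UNIV. Q i j) = 1" shows "mv Q (\<lambda>_. c) = (\<lambda>_. c)"
  by (rule ext) (simp add: mv_def sum_distrib_right[symmetric] rs)
lemma it_const: assumes rs: "\<And>i. (\<Sum>j\<in>UNIV. Q i j) = 1" shows "(mv Q ^^ k) (\<lambda>_. c) = (\<lambda>_. c)"
  by (induction k) (simp_all add: mv_const[OF rs])

lemma NP_const_add: assumes rs: "\<And>i. (\<Sum>j\<in>UNIV. Q i j) = 1"
  shows "NP Q K (\<lambda>i. x i + c) = NP Q K x"
proof -
  have "(mv Q ^^ k) (\<lambda>i. x i + c) = (\<lambda>i. (mv Q ^^ k) x i + c)" for k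
    using it_add[where Q=Q and k=k and x=x and y="\<lambda>_. c"] it_const[where Q=Q, OF rs, where k=k and c=c] by simp
  then show ?thesis unfolding NP_def by (simp add: osc_const_add)
qed

lemma NP_le: assumes nn: "\<And>i j. Q i j \<ge> 0" and rs: "\<And>i. (\<Sum>j\<in>UNIV. Q i j) = 1"
  shows "NP Q K x \<le> real K * osc x"
proof -
  have "NP Q K x \<le> (\<Sum>k<K. osc x)" unfolding NP_def
    by (rule sum_mono) (rule osc_it[where Q=Q, OF nn rs])
  then show ?thesis by simp
qed

lemma sum_it: assumes cs: "\<And>j. (\<Sum>i\<in>UNIV. Q i j) = 1"
  shows "sum ((mv Q ^^ k) y) UNIV = sum y UNIV"
  by (induction k) (simp_all add: sum_mv[where Q=Q, OF cs])

lemma n1_it: assumes nn: "\<And>i j. Q i j \<ge> 0" and cs: "\<And>j. (\<Sum>i\<in>UNIV. Q i j) = 1"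
  shows "n1 ((mv Q ^^ k) y) \<le> n1 y"
  by (induction k) (auto intro: order_trans[OF n1_mv[where Q=Q, OF nn cs]])

lemma NS_le: assumes nn: "\<And>i j. Q i j \<ge> 0" and cs: "\<And>j. (\<Sum>i\<in>UNIV. Q i j) = 1"
  shows "NS Q K x \<le> real K * n1 x"
proof -
  have "NS Q K x \<le> (\<Sum>k<K. n1 x)" unfolding NS_def
    by (rule sum_mono) (rule n1_it[where Q=Q, OF nn cs])
  then show ?thesis by simp
qed

lemma row_contract:
  fixes Q :: "'n::finite \<Rightarrow> 'n \<Rightarrow> real"
  assumes nn: "\<And>i j. Q i j \<ge> 0" and rs: "\<And>i. (\<Sum>j\<in>UNIV. Q i j) = 1"
    and K: "0 < K" and eta: "0 < \<eta>" and G: "\<And>i j. (mv Q ^^ K) (uvec j) i \<ge> \<eta>"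
  shows "NP Q K (mv Q x) \<le> (1 - real CARD('n) * \<eta> / real K) * NP Q K x"
proof -
  let ?G = "\<lambda>i j. (mv Q ^^ K) (uvec j) i"
  have grs: "(\<Sum>j\<in>UNIV. ?G i j) = 1" for i
    using it_lin[where Q=Q and k=K and y="\<lambda>_. 1" and i=i] it_const[where Q=Q, OF rs, where k=K and c=1] by simp
  have e: "(mv Q ^^ K) x = (\<lambda>i. \<Sum>j\<in>UNIV. ?G i j * x j)"
    by (rule ext) (simp add: it_lin[where Q=Q and k=K and y=x] mult.commute)
  have oK: "osc ((mv Q ^^ K) x) \<le> (1 - real CARD('n) * \<eta>) * osc x"
    unfolding e by (rule osc_G[OF grs G])
  have "NP Q K (mv Q x) = NP Q K x - osc x + osc ((mv Q ^^ K) x)"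
    unfolding NP_def it_Suc_right using sum_shift[of "\<lambda>k. osc ((mv Q ^^ k) x)" K] by simp
  also have "\<dots> \<le> NP Q K x - real CARD('n) * \<eta> * osc x" using oK by (simp add: algebra_simps)
  also have "\<dots> \<le> NP Q K x - real CARD('n) * \<eta> * (NP Q K x / real K)"
  proof -
    have "NP Q K x / real K \<le> osc x" using NP_le[where Q=Q, OF nn rs, where K=K and x=x] K by (simp add: field_simps)
    from mult_left_mono[OF this, of "real CARD('n) * \<eta>"] show ?thesis using eta by simp
  qed
  also have "\<dots> = (1 - real CARD('n) * \<eta> / real K) * NP Q K x" by (simp add: algebra_simps)
  finally show ?thesis .
qed

lemma col_contract:
  fixes Q :: "'n::finite \<Rightarrow> 'n \<Rightarrow> real"
  assumes nn: "\<And>i j. Q i j \<ge> 0" and cs: "\<And>j. (\<Sum>i\<in>UNIV. Q i j) = 1"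
    and K: "0 < K" and eta: "0 < \<eta>" and G: "\<And>i j. (mv Q ^^ K) (uvec j) i \<ge> \<eta>"
    and z: "sum x UNIV = 0"
  shows "NS Q K (mv Q x) \<le> (1 - real CARD('n) * \<eta> / real K) * NS Q K x"
proof -
  let ?G = "\<lambda>i j. (mv Q ^^ K) (uvec j) i"
  have gcs: "(\<Sum>i\<in>UNIV. ?G i j) = 1" for j
    using sum_it[where Q=Q, OF cs, where k=K and y="uvec j"] by (simp add: uvec_def)
  have e: "(mv Q ^^ K) x = (\<lambda>i. \<Sum>j\<in>UNIV. ?G i j * x j)"
    by (rule ext) (simp add: it_lin[where Q=Q and k=K and y=x] mult.commute)
  have oK: "n1 ((mv Q ^^ K) x) \<le> (1 - real CARD('n) * \<eta>) * n1 x"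
    unfolding e by (rule n1_G[OF gcs G z])
  have "NS Q K (mv Q x) = NS Q K x - n1 x + n1 ((mv Q ^^ K) x)"
    unfolding NS_def it_Suc_right using sum_shift[of "\<lambda>k. n1 ((mv Q ^^ k) x)" K] by simp
  also have "\<dots> \<le> NS Q K x - real CARD('n) * \<eta> * n1 x" using oK by (simp add: algebra_simps)
  also have "\<dots> \<le> NS Q K x - real CARD('n) * \<eta> * (NS Q K x / real K)"
  proof -
    have "NS Q K x / real K \<le> n1 x" using NS_le[where Q=Q, OF nn cs, where K=K and x=x] K by (simp add: field_simps)
    from mult_left_mono[OF this, of "real CARD('n) * \<eta>"] show ?thesis using eta by simp
  qed
  also have "\<dots> = (1 - real CARD('n) * \<eta> / real K) * NS Q K x" by (simp add: algebra_simps)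
  finally show ?thesis .
qed

lemma eta_bound_row:
  fixes Q :: "'n::finite \<Rightarrow> 'n \<Rightarrow> real"
  assumes rs: "\<And>i. (\<Sum>j\<in>UNIV. Q i j) = 1" and G: "\<And>i j. (mv Q ^^ K) (uvec j) i \<ge> \<eta>"
  shows "real CARD('n) * \<eta> \<le> 1"
proof -
  have "(\<Sum>j::'n\<in>UNIV. \<eta>) \<le> (\<Sum>j\<in>UNIV. (mv Q ^^ K) (uvec j) undefined)" by (rule sum_mono) (rule G)
  also have "\<dots> = 1" using it_lin[where Q=Q and k=K and y="\<lambda>_. 1" and i=undefined] it_const[where Q=Q, OF rs, where k=K and c=1] by simp
  finally show ?thesis by simp
qed

lemma eta_bound_col:
  fixes Q :: "'n::finite \<Rightarrow> 'n \<Rightarrow> real"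
  assumes cs: "\<And>j. (\<Sum>i\<in>UNIV. Q i j) = 1" and G: "\<And>i j. (mv Q ^^ K) (uvec j) i \<ge> \<eta>"
  shows "real CARD('n) * \<eta> \<le> 1"
proof -
  have "(\<Sum>i::'n\<in>UNIV. \<eta>) \<le> (\<Sum>i\<in>UNIV. (mv Q ^^ K) (uvec undefined) i)" by (rule sum_mono) (rule G)
  also have "\<dots> = 1" using sum_it[where Q=Q, OF cs, where k=K and y="uvec undefined"] by (simp add: uvec_def)
  finally show ?thesis by simp
qed

lemma geo_conv:
  fixes a :: "nat \<Rightarrow> real"
  assumes b: "\<And>k. \<bar>a (Suc k) - a k\<bar> \<le> C * q ^ k" and q: "0 \<le> q" "q < 1"
  shows "convergent a"
proof -
  have "summable (\<lambda>k. C * q ^ k)" using q by (intro summable_mult summable_geometric) simp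
  then have "summable (\<lambda>k. a (Suc k) - a k)"
    by (rule summable_comparison_test'[where N=0]) (use b in auto)
  then have "convergent (\<lambda>n. \<Sum>k<n. a (Suc k) - a k)"
    using summable_iff_convergent by blast
  then have "convergent (\<lambda>n. a n - a 0)" by (simp add: sum_lessThan_telescope)
  then have "convergent (\<lambda>n. (a n - a 0) + a 0)" by (rule convergent_add) (rule convergent_const)
  then show ?thesis by simp
qed

lemma it_fix: "mv Q p = p \<Longrightarrow> (mv Q ^^ k) p = p"
  by (induction k) simp_all

lemma perron_col:
  fixes Q :: "'n::finite \<Rightarrow> 'n \<Rightarrow> real"
  assumes nn: "\<And>i j. Q i j \<ge> 0" and cs: "\<And>j. (\<Sum>i\<in>UNIV. Q i j) = 1"
    and K: "0 < K" and eta: "0 < \<eta>" and G: "\<And>i j. (mv Q ^^ K) (uvec j) i \<ge> \<eta>"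
  shows "\<exists>p. (\<forall>i. p i \<ge> \<eta>) \<and> sum p UNIV = 1 \<and> mv Q p = p"
proof -
  define n where "n = real CARD('n)"
  have n0: "n > 0" unfolding n_def by simp
  define y0 :: "'n \<Rightarrow> real" where "y0 = (\<lambda>_. 1 / n)"
  have sy0: "sum y0 UNIV = 1" unfolding y0_def n_def by simp
  define d where "d = (\<lambda>i. mv Q y0 i - y0 i)"
  have sd: "sum d UNIV = 0" unfolding d_def using sum_mv[where Q=Q, OF cs, of y0] by (simp add: sum_subtractf)
  define q where "q = 1 - n * \<eta> / real K"
  have nb: "n * \<eta> \<le> 1" unfolding n_def by (rule eta_bound_col[OF cs G])
  have q0: "0 \<le> q" unfolding q_def using nb K by (simp add: field_simps)
  have q1: "q < 1" unfolding q_def using n0 eta K by simp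
  have decay: "NS Q K ((mv Q ^^ k) d) \<le> q ^ k * NS Q K d" for k
  proof (induction k)
    case 0 then show ?case by simp
  next
    case (Suc k)
    have z: "sum ((mv Q ^^ k) d) UNIV = 0" using sum_it[where Q=Q, OF cs] sd by simp
    have "NS Q K ((mv Q ^^ Suc k) d) \<le> q * NS Q K ((mv Q ^^ k) d)"
      unfolding q_def n_def using col_contract[OF nn cs K eta G z] by simp
    also have "\<dots> \<le> q * (q ^ k * NS Q K d)" using Suc q0 by (simp add: mult_left_mono)
    finally show ?case by simp
  qed
  have diff: "(mv Q ^^ Suc k) y0 i - (mv Q ^^ k) y0 i = (mv Q ^^ k) d i" for k i
    unfolding d_def it_diff it_Suc_right ..
  have conv: "convergent (\<lambda>k. (mv Q ^^ k) y0 i)" for i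
  proof (rule geo_conv[OF _ q0 q1])
    fix k
    have "\<bar>(mv Q ^^ k) d i\<bar> \<le> n1 ((mv Q ^^ k) d)" by (rule abs_le_2n1)
    also have "\<dots> \<le> NS Q K ((mv Q ^^ k) d)" by (rule NS_ge[OF K])
    also have "\<dots> \<le> NS Q K d * q ^ k" using decay[of k] by (simp add: mult.commute)
    finally show "\<bar>(mv Q ^^ Suc k) y0 i - (mv Q ^^ k) y0 i\<bar> \<le> NS Q K d * q ^ k"
      using diff by simp
  qed
  define p where "p i = lim (\<lambda>k. (mv Q ^^ k) y0 i)" for i
  have lp: "(\<lambda>k. (mv Q ^^ k) y0 i) \<longlonglongrightarrow> p i" for i
    unfolding p_def using conv convergent_LIMSEQ_iff by blast
  have fx: "mv Q p = p"
  proof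
    fix i
    have "(\<lambda>k. \<Sum>j\<in>UNIV. Q i j * (mv Q ^^ k) y0 j) \<longlonglongrightarrow> (\<Sum>j\<in>UNIV. Q i j * p j)"
      by (intro tendsto_intros lp)
    then have "(\<lambda>k. mv Q ((mv Q ^^ k) y0) i) \<longlonglongrightarrow> mv Q p i"
      using mv_Suc[where Q=Q and x=y0 and i=i] by (simp add: mv_def[of Q p])
    moreover have "(\<lambda>k. mv Q ((mv Q ^^ k) y0) i) \<longlonglongrightarrow> p i"
      using LIMSEQ_Suc[OF lp[of i]] by simp
    ultimately show "mv Q p i = p i" by (rule LIMSEQ_unique)
  qed
  have sp: "sum p UNIV = 1"
  proof -
    have "(\<lambda>k. \<Sum>i\<in>UNIV. (mv Q ^^ k) y0 i) \<longlonglongrightarrow> sum p UNIV"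
      by (intro tendsto_intros lp)
    moreover have "(\<lambda>k. \<Sum>i\<in>UNIV. (mv Q ^^ k) y0 i) = (\<lambda>k. 1)"
      using sum_it[where Q=Q, OF cs] sy0 by simp
    ultimately show ?thesis using LIMSEQ_unique tendsto_const by metis
  qed
  have pnn: "p i \<ge> 0" for i
  proof (rule LIMSEQ_le_const[OF lp])
    show "\<exists>N. \<forall>k\<ge>N. 0 \<le> (mv Q ^^ k) y0 i"
      using it_nonneg[where Q=Q, OF nn, of y0] n0 unfolding y0_def by auto
  qed
  have "p i \<ge> \<eta>" for i
  proof -
    have "p i = (mv Q ^^ K) p i" using it_fix[OF fx] by simp
    also have "\<dots> = (\<Sum>j\<in>UNIV. p j * (mv Q ^^ K) (uvec j) i)" by (rule it_lin)
    finally have e: "p i = (\<Sum>j\<in>UNIV. p j * (mv Q ^^ K) (uvec j) i)" .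
    have "(\<Sum>j\<in>UNIV. p j * \<eta>) \<le> (\<Sum>j\<in>UNIV. p j * (mv Q ^^ K) (uvec j) i)"
      by (rule sum_mono) (simp add: mult_left_mono G pnn)
    moreover have "(\<Sum>j\<in>UNIV. p j * \<eta>) = \<eta>" using sp by (simp add: sum_distrib_right[symmetric])
    ultimately show ?thesis using e by simp
  qed
  then show ?thesis using sp fx by blast
qed




definition uu :: "('n::finite \<Rightarrow> real) \<Rightarrow> ('n \<Rightarrow> real) \<Rightarrow> real" where
  "uu \<pi> X = (\<Sum>i\<in>UNIV. \<pi> i * X i)"
definition xtf :: "('n::finite \<Rightarrow> real) \<Rightarrow> ('n \<Rightarrow> real) \<Rightarrow> 'n \<Rightarrow> real" where
  "xtf \<pi> X i = X i - uu \<pi> X"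
definition shf :: "('n::finite \<Rightarrow> real) \<Rightarrow> ('n \<Rightarrow> real) \<Rightarrow> 'n \<Rightarrow> real" where
  "shf w Sv i = Sv i - sum Sv UNIV * w i"
definition bt :: "('n::finite \<Rightarrow> real) \<Rightarrow> ('n \<Rightarrow> real) \<Rightarrow> ('n \<Rightarrow> real) \<Rightarrow> real" where
  "bt \<pi> X Sv = sum X UNIV + sum Sv UNIV - real CARD('n) * uu \<pi> X"

lemma abs_wsum_le:
  fixes \<pi> :: "'n::finite \<Rightarrow> real"
  assumes "\<And>i. \<pi> i \<ge> 0" "sum \<pi> UNIV = 1"
  shows "\<bar>\<Sum>i\<in>UNIV. \<pi> i * y i\<bar> \<le> n1 y"
proof -
  have pi1: "\<pi> i \<le> 1" for i
    using member_le_sum[of i UNIV \<pi>] assms by auto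
  have "\<bar>\<Sum>i\<in>UNIV. \<pi> i * y i\<bar> \<le> (\<Sum>i\<in>UNIV. \<bar>\<pi> i * y i\<bar>)" by (rule sum_abs)
  also have "\<dots> \<le> n1 y" unfolding n1_def
    by (rule sum_mono) (simp add: abs_mult assms(1) pi1 mult_left_le_one_le)
  finally show ?thesis .
qed

lemma wavg_bounds:
  fixes \<pi> :: "'n::finite \<Rightarrow> real"
  assumes "\<And>i. \<pi> i \<ge> 0" "sum \<pi> UNIV = 1"
  shows "Min (range y) \<le> (\<Sum>i\<in>UNIV. \<pi> i * y i)" "(\<Sum>i\<in>UNIV. \<pi> i * y i) \<le> Max (range y)"
proof -
  have "(\<Sum>i\<in>UNIV. \<pi> i * Min (range y)) \<le> (\<Sum>i\<in>UNIV. \<pi> i * y i)"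
    by (rule sum_mono) (simp add: mult_left_mono assms Min_le_r)
  then show "Min (range y) \<le> (\<Sum>i\<in>UNIV. \<pi> i * y i)" using assms(2) by (simp add: sum_distrib_right[symmetric])
  have "(\<Sum>i\<in>UNIV. \<pi> i * y i) \<le> (\<Sum>i\<in>UNIV. \<pi> i * Max (range y))"
    by (rule sum_mono) (simp add: mult_left_mono assms le_Max_r)
  then show "(\<Sum>i\<in>UNIV. \<pi> i * y i) \<le> Max (range y)" using assms(2) by (simp add: sum_distrib_right[symmetric])
qed

lemma abs_le_osc_zero_avg:
  fixes \<pi> :: "'n::finite \<Rightarrow> real"
  assumes "\<And>i. \<pi> i \<ge> 0" "sum \<pi> UNIV = 1" "(\<Sum>i\<in>UNIV. \<pi> i * y i) = 0"
  shows "\<bar>y i\<bar> \<le> osc y"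
  using wavg_bounds[OF assms(1,2), of y] assms(3) le_Max_r[of y i] Min_le_r[of y i]
  unfolding osc_def by linarith

lemma xtf_avg: assumes "sum \<pi> UNIV = 1" shows "(\<Sum>i\<in>UNIV. \<pi> i * xtf \<pi> X i) = 0"
  using assms by (simp add: xtf_def uu_def right_diff_distrib sum_subtractf sum_distrib_right[symmetric])

lemma shf_sum: assumes "sum w UNIV = 1" shows "sum (shf w Sv) UNIV = 0"
  using assms by (simp add: shf_def sum_subtractf sum_distrib_left[symmetric])

lemma n1_xtf:
  fixes \<pi> :: "'n::finite \<Rightarrow> real"
  assumes "\<And>i. \<pi> i \<ge> 0" "sum \<pi> UNIV = 1"
  shows "n1 (xtf \<pi> X) \<le> real CARD('n) * osc (xtf \<pi> X)"
proof -
  have "n1 (xtf \<pi> X) \<le> (\<Sum>i::'n\<in>UNIV. osc (xtf \<pi> X))" unfolding n1_def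
    by (rule sum_mono) (rule abs_le_osc_zero_avg[OF assms xtf_avg[OF assms(2)]])
  then show ?thesis by simp
qed

lemma n1_I_minus_P:
  fixes P :: "'n::finite \<Rightarrow> 'n \<Rightarrow> real"
  assumes nn: "\<And>i j. P i j \<ge> 0" and rs: "\<And>i. (\<Sum>j\<in>UNIV. P i j) = 1"
  shows "n1 (\<lambda>i. y i - mv P y i) \<le> real CARD('n) * osc y"
proof -
  have "\<bar>y i - mv P y i\<bar> \<le> osc y" for i
    using mv_le_Max[where Q=P, OF nn rs, where x=y and i=i] mv_ge_Min[where Q=P, OF nn rs, where x=y and i=i]
      le_Max_r[of y i] Min_le_r[of y i] unfolding osc_def by linarith
  then have "n1 (\<lambda>i. y i - mv P y i) \<le> (\<Sum>i::'n\<in>UNIV. osc y)" unfolding n1_def by (intro sum_mono) auto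
  then show ?thesis by simp
qed

lemma n1_sum: "\<bar>sum y UNIV\<bar> \<le> n1 (y::'n::finite \<Rightarrow> real)"
  unfolding n1_def by (rule sum_abs)

lemma n1_prob: assumes "\<And>i. w i \<ge> 0" "sum w UNIV = 1" shows "n1 (w::'n::finite \<Rightarrow> real) = 1"
  using assms by (simp add: n1_def)

lemma uu_mv:
  assumes piP: "\<And>i. (\<Sum>j\<in>UNIV. \<pi> j * P j i) = \<pi> i"
  shows "uu \<pi> (mv P y) = uu \<pi> y"
proof -
  have "uu \<pi> (mv P y) = (\<Sum>i\<in>UNIV. \<Sum>j\<in>UNIV. \<pi> i * P i j * y j)"
    unfolding uu_def mv_def by (simp add: sum_distrib_left mult.assoc)
  also have "\<dots> = (\<Sum>j\<in>UNIV. (\<Sum>i\<in>UNIV. \<pi> i * P i j) * y j)"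
    by (subst sum.swap) (simp add: sum_distrib_right)
  also have "\<dots> = uu \<pi> y" using piP by (simp add: uu_def)
  finally show ?thesis .
qed

lemma xtf_step:
  assumes rs: "\<And>i. (\<Sum>j\<in>UNIV. P i j) = 1"
    and piP: "\<And>i. (\<Sum>j\<in>UNIV. \<pi> j * P j i) = \<pi> i"
    and X': "X' = (\<lambda>i. mv P X i + \<epsilon> * Sv i)"
  shows "xtf \<pi> X' = (\<lambda>i. mv P (xtf \<pi> X) i + (\<epsilon> * Sv i + - (\<epsilon> * uu \<pi> Sv)))"
proof -
  have u: "uu \<pi> X' = uu \<pi> X + \<epsilon> * uu \<pi> Sv"
    unfolding X' using uu_mv[of \<pi> P X, OF piP]
    by (simp add: uu_def distrib_left sum.distrib sum_distrib_left mult.left_commute)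
  have m: "mv P (xtf \<pi> X) i = mv P X i - uu \<pi> X" for i
  proof -
    have "mv P (xtf \<pi> X) i = mv P X i - mv P (\<lambda>_. uu \<pi> X) i"
      unfolding xtf_def[abs_def] mv_diff by simp
    then show ?thesis using mv_const[where Q=P, OF rs] by simp
  qed
  show ?thesis
  proof
    fix i
    have "X' i = mv P X i + \<epsilon> * Sv i" using X' by simp
    then show "xtf \<pi> X' i = mv P (xtf \<pi> X) i + (\<epsilon> * Sv i + - (\<epsilon> * uu \<pi> Sv))"
      by (simp add: xtf_def u m)
  qed
qed

lemma NP_xtf_step:
  assumes nn: "\<And>i j. P i j \<ge> 0" and rs: "\<And>i. (\<Sum>j\<in>UNIV. P i j) = 1"
    and piP: "\<And>i. (\<Sum>j\<in>UNIV. \<pi> j * P j i) = \<pi> i"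
    and X': "X' = (\<lambda>i. mv P X i + \<epsilon> * Sv i)" and e0: "\<epsilon> \<ge> 0"
  shows "NP P K (xtf \<pi> X') \<le> NP P K (mv P (xtf \<pi> X)) + \<epsilon> * (2 * real K) * n1 Sv"
proof -
  have "NP P K (xtf \<pi> X') \<le> NP P K (mv P (xtf \<pi> X)) + NP P K (\<lambda>i. \<epsilon> * Sv i + - (\<epsilon> * uu \<pi> Sv))"
    unfolding xtf_step[OF rs piP X'] by (rule NP_add)
  also have "NP P K (\<lambda>i. \<epsilon> * Sv i + - (\<epsilon> * uu \<pi> Sv)) = \<epsilon> * NP P K Sv"
    using NP_const_add[where Q=P, OF rs, of K "\<lambda>i. \<epsilon> * Sv i" "- (\<epsilon> * uu \<pi> Sv)"] NP_scale[of P K \<epsilon> Sv] e0 by simp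
  also have "\<epsilon> * NP P K Sv \<le> \<epsilon> * (2 * real K * n1 Sv)"
  proof -
    have "NP P K Sv \<le> real K * osc Sv" by (rule NP_le[where Q=P, OF nn rs])
    also have "\<dots> \<le> real K * (2 * n1 Sv)" by (rule mult_left_mono[OF osc_le_n1]) simp
    finally show ?thesis using e0 by (simp add: mult_left_mono)
  qed
  finally show ?thesis by simp
qed

lemma shf_step:
  assumes cs: "\<And>j. (\<Sum>i\<in>UNIV. S i j) = 1" and Sw: "mv S w = w"
    and S': "Sv' = (\<lambda>i. X i - mv P X i + mv S Sv i - \<epsilon> * Sv i)"
  shows "shf w Sv' = (\<lambda>i. mv S (shf w Sv) i + (- (\<epsilon> * shf w Sv i) +
           ((X i - mv P X i) - sum (\<lambda>j. X j - mv P X j) UNIV * w i)))"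
proof
  fix i
  let ?v = "\<lambda>j. X j - mv P X j"
  have ss: "sum Sv' UNIV = sum ?v UNIV + sum Sv UNIV - \<epsilon> * sum Sv UNIV"
    unfolding S' using sum_mv[where Q=S, OF cs, of Sv]
    by (simp add: sum.distrib sum_subtractf sum_distrib_left)
  have m: "mv S (shf w Sv) i = mv S Sv i - sum Sv UNIV * w i"
  proof -
    have "mv S (shf w Sv) i = mv S Sv i - mv S (\<lambda>j. sum Sv UNIV * w j) i"
      unfolding shf_def[abs_def] mv_diff by simp
    also have "\<dots> = mv S Sv i - sum Sv UNIV * w i"
      unfolding mv_scale using Sw by simp
    finally show ?thesis .
  qed
  have "Sv' i = ?v i + mv S Sv i - \<epsilon> * Sv i" using S' by simp
  then show "shf w Sv' i = mv S (shf w Sv) i + (- (\<epsilon> * shf w Sv i) + (?v i - sum ?v UNIV * w i))"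
    unfolding shf_def[of w Sv'] ss m by (simp add: shf_def algebra_simps)
qed

lemma NS_shf_step:
  fixes P S :: "'n::finite \<Rightarrow> 'n \<Rightarrow> real"
  assumes Pnn: "\<And>i j. P i j \<ge> 0" and Prs: "\<And>i. (\<Sum>j\<in>UNIV. P i j) = 1"
    and nn: "\<And>i j. S i j \<ge> 0" and cs: "\<And>j. (\<Sum>i\<in>UNIV. S i j) = 1" and Sw: "mv S w = w"
    and wnn: "\<And>i. w i \<ge> 0" and ws: "sum w UNIV = 1"
    and S': "Sv' = (\<lambda>i. X i - mv P X i + mv S Sv i - \<epsilon> * Sv i)" and e0: "\<epsilon> \<ge> 0"
  shows "NS S K (shf w Sv') \<le> NS S K (mv S (shf w Sv)) + \<epsilon> * NS S K (shf w Sv)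
           + 2 * real K * real CARD('n) * osc (xtf \<pi> X)"
proof -
  let ?v = "\<lambda>j. X j - mv P X j"
  let ?r = "\<lambda>i. ?v i - sum ?v UNIV * w i"
  have "NS S K (shf w Sv') \<le> NS S K (mv S (shf w Sv)) + NS S K (\<lambda>i. - (\<epsilon> * shf w Sv i) + ?r i)"
    unfolding shf_step[OF cs Sw S'] by (rule NS_add)
  also have "NS S K (\<lambda>i. - (\<epsilon> * shf w Sv i) + ?r i) \<le> NS S K (\<lambda>i. - \<epsilon> * shf w Sv i) + NS S K ?r"
    using NS_add[of S K "\<lambda>i. - \<epsilon> * shf w Sv i" ?r] by simp
  also have "NS S K (\<lambda>i. - \<epsilon> * shf w Sv i) = \<epsilon> * NS S K (shf w Sv)"
    using NS_scale[of S K "-\<epsilon>" "shf w Sv"] e0 by simp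
  also have "NS S K ?r \<le> 2 * real K * real CARD('n) * osc (xtf \<pi> X)"
  proof -
    have "n1 ?r \<le> n1 ?v + n1 (\<lambda>i. sum ?v UNIV * w i)" by (rule n1_diff)
    also have "n1 (\<lambda>i. sum ?v UNIV * w i) = \<bar>sum ?v UNIV\<bar>"
      unfolding n1_scale n1_prob[OF wnn ws] by simp
    also have "\<bar>sum ?v UNIV\<bar> \<le> n1 ?v" by (rule n1_sum)
    finally have r1: "n1 ?r \<le> 2 * n1 ?v" by simp
    have "n1 ?v \<le> real CARD('n) * osc X" by (rule n1_I_minus_P[OF Pnn Prs])
    also have "osc X = osc (xtf \<pi> X)"
      using osc_const_add[of X "- uu \<pi> X"] by (simp add: xtf_def[abs_def])
    finally have r2: "n1 ?r \<le> 2 * real CARD('n) * osc (xtf \<pi> X)" using r1 by simp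
    have "NS S K ?r \<le> real K * n1 ?r" by (rule NS_le[where Q=S, OF nn cs])
    also have "\<dots> \<le> real K * (2 * real CARD('n) * osc (xtf \<pi> X))" by (rule mult_left_mono[OF r2]) simp
    finally show ?thesis by (simp add: algebra_simps)
  qed
  finally show ?thesis by simp
qed

lemma bt_step:
  fixes X :: "'n::finite \<Rightarrow> real"
  assumes cs: "\<And>j. (\<Sum>i\<in>UNIV. S i j) = 1"
    and piP: "\<And>i. (\<Sum>j\<in>UNIV. \<pi> j * P j i) = \<pi> i"
    and X': "X' = (\<lambda>i. mv P X i + \<epsilon> * Sv i)"
    and S': "Sv' = (\<lambda>i. X i - mv P X i + mv S Sv i - \<epsilon> * Sv i)"
  shows "sum X' UNIV + sum Sv' UNIV = sum X UNIV + sum Sv UNIV"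
    and "bt \<pi> X' Sv' = bt \<pi> X Sv - real CARD('n::finite) * \<epsilon> * uu \<pi> Sv"
proof -
  show c: "sum X' UNIV + sum Sv' UNIV = sum X UNIV + sum Sv UNIV"
    unfolding X' S' using sum_mv[where Q=S, OF cs, of Sv]
    by (simp add: sum.distrib sum_subtractf sum_distrib_left)
  have u: "uu \<pi> X' = uu \<pi> X + \<epsilon> * uu \<pi> Sv"
    unfolding X' using uu_mv[of \<pi> P X, OF piP]
    by (simp add: uu_def distrib_left sum.distrib sum_distrib_left mult.left_commute)
  show "bt \<pi> X' Sv' = bt \<pi> X Sv - real CARD('n::finite) * \<epsilon> * uu \<pi> Sv"
    unfolding bt_def c u by (simp add: algebra_simps)
qed

lemma uu_Sv_decomp:
  assumes pis: "sum \<pi> UNIV = 1"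
  shows "uu \<pi> Sv = uu \<pi> (shf w Sv) + (bt \<pi> X Sv - sum (xtf \<pi> X) UNIV) * uu \<pi> w"
    and "Sv i = shf w Sv i + (bt \<pi> X Sv - sum (xtf \<pi> X) UNIV) * w i"
proof -
  have s: "bt \<pi> X Sv - sum (xtf \<pi> X) UNIV = sum Sv UNIV"
    unfolding bt_def xtf_def by (simp add: sum_subtractf)
  show "uu \<pi> Sv = uu \<pi> (shf w Sv) + (bt \<pi> X Sv - sum (xtf \<pi> X) UNIV) * uu \<pi> w"
    unfolding s uu_def shf_def by (simp add: algebra_simps sum_subtractf sum_distrib_left)
  show "Sv i = shf w Sv i + (bt \<pi> X Sv - sum (xtf \<pi> X) UNIV) * w i"
    unfolding s shf_def by simp
qed




lemma combine:
  fixes a b c a' b' c' q1 q2 e c1 c2 n \<kappa> \<gamma> \<delta> :: real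
  assumes nonneg: "a \<ge> 0" "b \<ge> 0" "c \<ge> 0" "e \<ge> 0" "n \<ge> 0" "c1 \<ge> 0" "c2 \<ge> 0"
    and ha: "a' \<le> q1 * a + e * c1 * (b + c + n * a)"
    and hb: "b' \<le> (q2 + e) * b + c2 * a"
    and hc: "c' \<le> (1 - e * \<kappa>) * c + n * e * (b + n * a)"
    and ek: "e * \<kappa> \<le> 1" and kp: "\<kappa> > 0"
    and g: "\<gamma> = 2 * c1 / \<kappa>" and d: "\<delta> = (1 - q1) / (2 * (c2 + 1))" and q1: "q1 < 1"
    and e2: "e * (c1 * n + \<gamma> * n * n) \<le> (1 - q1) / 4"
    and e4: "e * (c1 + \<gamma> * n) \<le> \<delta> * (1 - q2) / 4" and e3: "e \<le> (1 - q2) / 4"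
  shows "a' + \<delta> * b' + \<gamma> * c' \<le> (1 - (1 - q1) / 4) * a + (1 - (1 - q2) / 2) * (\<delta> * b)
           + (1 - e * \<kappa> / 2) * (\<gamma> * c)"
proof -
  have gn: "\<gamma> \<ge> 0" using g kp nonneg by simp
  have dn: "\<delta> \<ge> 0" using d q1 nonneg by simp
  have "a' + \<delta> * b' + \<gamma> * c' \<le> (q1 * a + e * c1 * (b + c + n * a)) + \<delta> * ((q2 + e) * b + c2 * a)
          + \<gamma> * ((1 - e * \<kappa>) * c + n * e * (b + n * a))"
    using ha mult_left_mono[OF hb dn] mult_left_mono[OF hc gn] by linarith
  also have "\<dots> = (q1 + e * (c1 * n + \<gamma> * n * n) + \<delta> * c2) * a
      + (\<delta> * q2 + \<delta> * e + e * (c1 + \<gamma> * n)) * b + (e * c1 + \<gamma> - \<gamma> * e * \<kappa>) * c"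
    by (simp add: algebra_simps)
  also have "\<dots> \<le> (1 - (1 - q1) / 4) * a + (1 - (1 - q2) / 2) * (\<delta> * b) + (1 - e * \<kappa> / 2) * (\<gamma> * c)"
  proof -
    have dc: "\<delta> * c2 \<le> (1 - q1) / 2"
    proof -
      have "\<delta> * c2 = (1 - q1) / 2 * (c2 / (c2 + 1))" using d by (simp add: field_simps)
      also have "\<dots> \<le> (1 - q1) / 2 * 1" using q1 nonneg by (intro mult_left_mono) (auto simp: divide_le_eq_1)
      finally show ?thesis by simp
    qed
    have 1: "(q1 + e * (c1 * n + \<gamma> * n * n) + \<delta> * c2) * a \<le> (1 - (1 - q1) / 4) * a"
    proof (rule mult_right_mono[OF _ nonneg(1)])
      have "(1 - q1) / 4 + (1 - q1) / 2 = 3 * (1 - q1) / 4" by simp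
      then show "q1 + e * (c1 * n + \<gamma> * n * n) + \<delta> * c2 \<le> 1 - (1 - q1) / 4"
        using e2 dc by argo
    qed
    have "\<delta> * e \<le> \<delta> * ((1 - q2) / 4)" using e3 dn by (rule mult_left_mono)
    then have "\<delta> * q2 + \<delta> * e + e * (c1 + \<gamma> * n) \<le> (1 - (1 - q2) / 2) * \<delta>"
      using e4 by argo
    then have 2: "(\<delta> * q2 + \<delta> * e + e * (c1 + \<gamma> * n)) * b \<le> (1 - (1 - q2) / 2) * (\<delta> * b)"
      using nonneg(2) by (metis mult.assoc mult_right_mono)
    have "e * c1 = \<gamma> * e * \<kappa> / 2" using g kp by (simp add: field_simps)
    then have 3: "(e * c1 + \<gamma> - \<gamma> * e * \<kappa>) * c = (1 - e * \<kappa> / 2) * (\<gamma> * c)"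
      by (simp add: algebra_simps)
    show ?thesis using 1 2 3 by linarith
  qed
  finally show ?thesis .
qed

lemma main_conv:
  fixes P S :: "'n::finite \<Rightarrow> 'n \<Rightarrow> real" and \<pi> w :: "'n \<Rightarrow> real"
  assumes Pnn: "\<And>i j. P i j \<ge> 0" and Prs: "\<And>i. (\<Sum>j\<in>UNIV. P i j) = 1"
    and Snn: "\<And>i j. S i j \<ge> 0" and Scs: "\<And>j. (\<Sum>i\<in>UNIV. S i j) = 1"
    and K1: "0 < K1" and q1: "0 \<le> q1" "q1 < 1" and Pc: "\<And>x. NP P K1 (mv P x) \<le> q1 * NP P K1 x"
    and K2: "0 < K2" and q2: "0 \<le> q2" "q2 < 1"
    and Sc: "\<And>y. sum y UNIV = 0 \<Longrightarrow> NS S K2 (mv S y) \<le> q2 * NS S K2 y"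
    and pinn: "\<And>i. \<pi> i \<ge> 0" and pis: "sum \<pi> UNIV = 1"
    and piP: "\<And>i. (\<Sum>j\<in>UNIV. \<pi> j * P j i) = \<pi> i"
    and wnn: "\<And>i. w i \<ge> 0" and ws: "sum w UNIV = 1" and Sw: "mv S w = w"
    and kap: "uu \<pi> w > 0"
  shows "\<exists>eb>0. \<forall>\<epsilon> X Sv. 0 < \<epsilon> \<and> \<epsilon> < eb \<and> Sv 0 = (\<lambda>_. 0)
     \<and> (\<forall>k. X (Suc k) = (\<lambda>i. mv P (X k) i + \<epsilon> * Sv k i))
     \<and> (\<forall>k. Sv (Suc k) = (\<lambda>i. X k i - mv P (X k) i + mv S (Sv k) i - \<epsilon> * Sv k i))
     \<longrightarrow> (\<forall>i. (\<lambda>k. X k i) \<longlonglongrightarrow> sum (X 0) UNIV / real CARD('n)) \<and> (\<forall>i. (\<lambda>k. Sv k i) \<longlonglongrightarrow> 0)"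
proof -
  define n where "n = real CARD('n)"
  have n0: "n > 0" unfolding n_def by simp
  define \<kappa>0 where "\<kappa>0 = uu \<pi> w"
  define \<kappa> where "\<kappa> = n * \<kappa>0"
  have k0p: "\<kappa>0 > 0" using kap unfolding \<kappa>0_def .
  have k01: "\<kappa>0 \<le> 1" unfolding \<kappa>0_def uu_def
    using abs_wsum_le[OF pinn pis, of w] n1_prob[OF wnn ws] by simp
  have kp: "\<kappa> > 0" unfolding \<kappa>_def using n0 k0p by simp
  define c1 where "c1 = 2 * real K1"
  define c2 where "c2 = 2 * real K2 * n"
  have c1p: "c1 > 0" unfolding c1_def using K1 by simp
  have c2p: "c2 \<ge> 0" unfolding c2_def using n0 by simp
  define \<gamma> where "\<gamma> = 2 * c1 / \<kappa>"
  define \<delta> where "\<delta> = (1 - q1) / (2 * (c2 + 1))"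
  have gp: "\<gamma> > 0" unfolding \<gamma>_def using c1p kp by simp
  have dp: "\<delta> > 0" unfolding \<delta>_def using q1 c2p by simp
  define eb where "eb = min (min (1 / \<kappa>) ((1 - q1) / (4 * (c1 * n + \<gamma> * n * n))))
                          (min ((1 - q2) / 4) (\<delta> * (1 - q2) / (4 * (c1 + \<gamma> * n))))"
  have ebp: "eb > 0" unfolding eb_def using kp q1 q2 c1p gp n0 dp
    by (auto intro!: divide_pos_pos add_pos_pos mult_pos_pos)
  show ?thesis
  proof (intro exI[of _ eb] conjI allI impI ebp)
    fix \<epsilon> :: real and X Sv :: "nat \<Rightarrow> 'n \<Rightarrow> real"
    assume H: "0 < \<epsilon> \<and> \<epsilon> < eb \<and> Sv 0 = (\<lambda>_. 0)
     \<and> (\<forall>k. X (Suc k) = (\<lambda>i. mv P (X k) i + \<epsilon> * Sv k i))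
     \<and> (\<forall>k. Sv (Suc k) = (\<lambda>i. X k i - mv P (X k) i + mv S (Sv k) i - \<epsilon> * Sv k i))"
    then have ep: "0 < \<epsilon>" and eeb: "\<epsilon> < eb" and S0: "Sv 0 = (\<lambda>_. 0)"
      and XS: "\<And>k. X (Suc k) = (\<lambda>i. mv P (X k) i + \<epsilon> * Sv k i)"
      and SS: "\<And>k. Sv (Suc k) = (\<lambda>i. X k i - mv P (X k) i + mv S (Sv k) i - \<epsilon> * Sv k i)"
      by auto
    have ek: "\<epsilon> * \<kappa> \<le> 1"
    proof -
      have "\<epsilon> \<le> 1 / \<kappa>" using eeb unfolding eb_def by simp
      then show ?thesis using kp by (simp add: field_simps)
    qed
    have e2: "\<epsilon> * (c1 * n + \<gamma> * n * n) \<le> (1 - q1) / 4"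
    proof -
      have pos: "c1 * n + \<gamma> * n * n > 0" using c1p gp n0 by (simp add: add_pos_pos)
      have "\<epsilon> \<le> (1 - q1) / (4 * (c1 * n + \<gamma> * n * n))" using eeb unfolding eb_def by simp
      then show ?thesis using pos by (simp add: field_simps)
    qed
    have e3: "\<epsilon> \<le> (1 - q2) / 4" using eeb unfolding eb_def by simp
    have e4: "\<epsilon> * (c1 + \<gamma> * n) \<le> \<delta> * (1 - q2) / 4"
    proof -
      have pos: "c1 + \<gamma> * n > 0" using c1p gp n0 by (simp add: add_pos_pos)
      have "\<epsilon> \<le> \<delta> * (1 - q2) / (4 * (c1 + \<gamma> * n))" using eeb unfolding eb_def by simp
      then show ?thesis using pos by (simp add: field_simps)
    qed
    define A where "A k = NP P K1 (xtf \<pi> (X k))" for k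
    define B where "B k = NS S K2 (shf w (Sv k))" for k
    define C where "C k = \<bar>bt \<pi> (X k) (Sv k)\<bar>" for k
    have An: "A k \<ge> 0" for k unfolding A_def by (rule NP_nonneg)
    have Bn: "B k \<ge> 0" for k unfolding B_def by (rule NS_nonneg)
    have Cn: "C k \<ge> 0" for k unfolding C_def by simp
    have oscA: "osc (xtf \<pi> (X k)) \<le> A k" for k unfolding A_def by (rule NP_ge[OF K1])
    have n1xt: "n1 (xtf \<pi> (X k)) \<le> n * A k" for k
      using n1_xtf[OF pinn pis, of "X k"] oscA[of k] n0 unfolding n_def
      by (meson mult_left_mono order_trans less_imp_le)
    have n1sh: "n1 (shf w (Sv k)) \<le> B k" for k unfolding B_def by (rule NS_ge[OF K2])
    have n1Sv: "n1 (Sv k) \<le> B k + C k + n * A k" for k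
    proof -
      let ?s = "bt \<pi> (X k) (Sv k) - sum (xtf \<pi> (X k)) UNIV"
      have "Sv k = (\<lambda>i. shf w (Sv k) i + ?s * w i)"
        using uu_Sv_decomp(2)[OF pis, where Sv="Sv k" and w=w and X="X k"] by auto
      then have "n1 (Sv k) \<le> n1 (shf w (Sv k)) + n1 (\<lambda>i. ?s * w i)"
        using n1_add[of "shf w (Sv k)" "\<lambda>i. ?s * w i"] by simp
      also have "n1 (\<lambda>i. ?s * w i) = \<bar>?s\<bar>" unfolding n1_scale n1_prob[OF wnn ws] by simp
      also have "\<bar>?s\<bar> \<le> C k + n1 (xtf \<pi> (X k))" unfolding C_def using n1_sum[of "xtf \<pi> (X k)"] by linarith
      finally show ?thesis using n1sh[of k] n1xt[of k] by linarith
    qed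
    have stepA: "A (Suc k) \<le> q1 * A k + \<epsilon> * c1 * (B k + C k + n * A k)" for k
    proof -
      have "A (Suc k) \<le> NP P K1 (mv P (xtf \<pi> (X k))) + \<epsilon> * (2 * real K1) * n1 (Sv k)"
        unfolding A_def by (rule NP_xtf_step[OF Pnn Prs piP XS]) (use ep in simp)
      also have "\<dots> \<le> q1 * A k + \<epsilon> * c1 * (B k + C k + n * A k)"
      proof -
        have "\<epsilon> * c1 * n1 (Sv k) \<le> \<epsilon> * c1 * (B k + C k + n * A k)"
          by (rule mult_left_mono[OF n1Sv]) (use ep c1p in simp)
        then show ?thesis using Pc[of "xtf \<pi> (X k)"] unfolding A_def c1_def by linarith
      qed
      finally show ?thesis .
    qed
    have stepB: "B (Suc k) \<le> (q2 + \<epsilon>) * B k + c2 * A k" for k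
    proof -
      have "B (Suc k) \<le> NS S K2 (mv S (shf w (Sv k))) + \<epsilon> * B k + 2 * real K2 * n * osc (xtf \<pi> (X k))"
        unfolding B_def n_def by (rule NS_shf_step[OF Pnn Prs Snn Scs Sw wnn ws SS]) (use ep in simp)
      moreover have "NS S K2 (mv S (shf w (Sv k))) \<le> q2 * B k"
        unfolding B_def by (rule Sc[OF shf_sum[OF ws]])
      moreover have "2 * real K2 * n * osc (xtf \<pi> (X k)) \<le> c2 * A k"
        unfolding c2_def using oscA[of k] c2p c2_def by (simp add: mult_left_mono)
      ultimately show ?thesis by (simp add: algebra_simps)
    qed
    have stepC: "C (Suc k) \<le> (1 - \<epsilon> * \<kappa>) * C k + n * \<epsilon> * (B k + n * A k)" for k
    proof -
      let ?b = "bt \<pi> (X k) (Sv k)" and ?t = "sum (xtf \<pi> (X k)) UNIV" and ?h = "uu \<pi> (shf w (Sv k))"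
      have "bt \<pi> (X (Suc k)) (Sv (Suc k)) = ?b - n * \<epsilon> * uu \<pi> (Sv k)"
        unfolding n_def by (rule bt_step(2)[OF Scs piP XS SS])
      also have "uu \<pi> (Sv k) = ?h + (?b - ?t) * \<kappa>0"
        unfolding \<kappa>0_def by (rule uu_Sv_decomp(1)[OF pis])
      finally have e: "bt \<pi> (X (Suc k)) (Sv (Suc k)) = (1 - \<epsilon> * \<kappa>) * ?b - n * \<epsilon> * ?h + n * \<epsilon> * \<kappa>0 * ?t"
        unfolding \<kappa>_def by (simp add: algebra_simps)
      have "\<bar>(1 - \<epsilon> * \<kappa>) * ?b - n * \<epsilon> * ?h + n * \<epsilon> * \<kappa>0 * ?t\<bar>
            \<le> (1 - \<epsilon> * \<kappa>) * \<bar>?b\<bar> + n * \<epsilon> * \<bar>?h\<bar> + n * \<epsilon> * \<kappa>0 * \<bar>?t\<bar>"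
      proof -
        have tri: "\<bar>x - y + z\<bar> \<le> \<bar>x\<bar> + \<bar>y\<bar> + \<bar>z\<bar>" for x y z :: real by arith
        have a1: "\<bar>(1 - \<epsilon> * \<kappa>) * ?b\<bar> = (1 - \<epsilon> * \<kappa>) * \<bar>?b\<bar>" using ek by (simp add: abs_mult)
        have a2: "\<bar>n * \<epsilon> * ?h\<bar> = n * \<epsilon> * \<bar>?h\<bar>" using ep n0 by (simp add: abs_mult)
        have a3: "\<bar>n * \<epsilon> * \<kappa>0 * ?t\<bar> = n * \<epsilon> * \<kappa>0 * \<bar>?t\<bar>" using ep n0 k0p by (simp add: abs_mult)
        show ?thesis using tri[of "(1 - \<epsilon> * \<kappa>) * ?b" "n * \<epsilon> * ?h" "n * \<epsilon> * \<kappa>0 * ?t"] a1 a2 a3 by linarith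
      qed
      also have "\<dots> \<le> (1 - \<epsilon> * \<kappa>) * C k + n * \<epsilon> * B k + n * \<epsilon> * (n * A k)"
      proof -
        have h: "\<bar>?h\<bar> \<le> B k" using abs_wsum_le[OF pinn pis, of "shf w (Sv k)"] n1sh[of k] unfolding uu_def by linarith
        have t: "\<kappa>0 * \<bar>?t\<bar> \<le> n * A k"
        proof -
          have "\<kappa>0 * \<bar>?t\<bar> \<le> 1 * \<bar>?t\<bar>" using k01 by (intro mult_right_mono) auto
          then show ?thesis using n1_sum[of "xtf \<pi> (X k)"] n1xt[of k] by linarith
        qed
        have ne: "n * \<epsilon> \<ge> 0" using n0 ep by simp
        show ?thesis unfolding C_def using mult_left_mono[OF h ne] mult_left_mono[OF t ne]
          by (simp add: mult.assoc)
      qed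
      finally show ?thesis unfolding C_def[of "Suc k"] e by (simp add: algebra_simps)
    qed
    define r where "r = max (max (1 - (1 - q1) / 4) (1 - (1 - q2) / 2)) (1 - \<epsilon> * \<kappa> / 2)"
    have r0: "0 \<le> r"
    proof -
      have "0 \<le> 1 - (1 - q1) / 4" using q1 by argo
      then show ?thesis unfolding r_def by (simp add: le_max_iff_disj)
    qed
    have r1: "r < 1" unfolding r_def using q1 q2 ep kp by simp
    define V where "V k = A k + \<delta> * B k + \<gamma> * C k" for k
    have Vstep: "V (Suc k) \<le> r * V k" for k
    proof -
      have "V (Suc k) \<le> (1 - (1 - q1) / 4) * A k + (1 - (1 - q2) / 2) * (\<delta> * B k) + (1 - \<epsilon> * \<kappa> / 2) * (\<gamma> * C k)"
        unfolding V_def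
        by (rule combine[OF An Bn Cn less_imp_le[OF ep] less_imp_le[OF n0] less_imp_le[OF c1p] c2p
              stepA stepB stepC ek kp \<gamma>_def \<delta>_def q1(2) e2 e4 e3])
      also have "\<dots> \<le> r * A k + r * (\<delta> * B k) + r * (\<gamma> * C k)"
        using An[of k] Bn[of k] Cn[of k] dp gp unfolding r_def
        by (intro add_mono mult_right_mono) auto
      finally show ?thesis unfolding V_def by (simp add: algebra_simps)
    qed
    have Vb: "V k \<le> r ^ k * V 0" for k
    proof (induction k)
      case 0 then show ?case by simp
    next
      case (Suc k)
      have "V (Suc k) \<le> r * V k" by (rule Vstep)
      also have "\<dots> \<le> r * (r ^ k * V 0)" using Suc r0 by (rule mult_left_mono)
      finally show ?case by simp
    qed
    have Vlim: "(\<lambda>k. r ^ k * V 0) \<longlonglongrightarrow> 0"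
      by (rule tendsto_mult_left_zero) (rule LIMSEQ_power_zero, use r0 r1 in simp)
    have lim0: "f \<longlonglongrightarrow> 0" if "\<And>k. \<bar>f k\<bar> \<le> M * (r ^ k * V 0)" for f :: "nat \<Rightarrow> real" and M
      by (rule Lim_null_comparison[where g="\<lambda>k. M * (r ^ k * V 0)"])
         (use that in \<open>auto intro: tendsto_mult_right_zero Vlim\<close>)
    have AV: "A k \<le> V k" "\<delta> * B k \<le> V k" "\<gamma> * C k \<le> V k" for k
      unfolding V_def using An[of k] Bn[of k] Cn[of k] dp gp by (auto simp: less_imp_le)
    have T: "sum (X k) UNIV + sum (Sv k) UNIV = sum (X 0) UNIV" for k
    proof (induction k)
      case 0 then show ?case using S0 by simp
    next
      case (Suc k) then show ?case using bt_step(1)[OF Scs piP XS SS, of k] by simp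
    qed
    have xtl: "(\<lambda>k. xtf \<pi> (X k) i) \<longlonglongrightarrow> 0" for i
    proof (rule lim0[of _ 1])
      fix k
      have "\<bar>xtf \<pi> (X k) i\<bar> \<le> osc (xtf \<pi> (X k))"
        by (rule abs_le_osc_zero_avg[OF pinn pis xtf_avg[OF pis]])
      then show "\<bar>xtf \<pi> (X k) i\<bar> \<le> 1 * (r ^ k * V 0)" using oscA[of k] AV(1)[of k] Vb[of k] by simp
    qed
    have btl: "(\<lambda>k. bt \<pi> (X k) (Sv k)) \<longlonglongrightarrow> 0"
    proof (rule lim0[of _ "1 / \<gamma>"])
      fix k
      have "\<gamma> * C k \<le> r ^ k * V 0" using AV(3)[of k] Vb[of k] by simp
      then show "\<bar>bt \<pi> (X k) (Sv k)\<bar> \<le> 1 / \<gamma> * (r ^ k * V 0)" using gp unfolding C_def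
        by (simp add: field_simps)
    qed
    have shl: "(\<lambda>k. shf w (Sv k) i) \<longlonglongrightarrow> 0" for i
    proof (rule lim0[of _ "1 / \<delta>"])
      fix k
      have "\<delta> * B k \<le> r ^ k * V 0" using AV(2)[of k] Vb[of k] by simp
      then have "B k \<le> 1 / \<delta> * (r ^ k * V 0)" using dp by (simp add: field_simps)
      then show "\<bar>shf w (Sv k) i\<bar> \<le> 1 / \<delta> * (r ^ k * V 0)"
        using abs_le_2n1[of "shf w (Sv k)" i] n1sh[of k] by linarith
    qed
    have sxl: "(\<lambda>k. sum (xtf \<pi> (X k)) UNIV) \<longlonglongrightarrow> 0"
      using tendsto_sum[of UNIV "\<lambda>i k. xtf \<pi> (X k) i" "\<lambda>_. 0" sequentially] xtl by simp
    have Svl: "(\<lambda>k. Sv k i) \<longlonglongrightarrow> 0" for i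
    proof -
      have "(\<lambda>k. shf w (Sv k) i + (bt \<pi> (X k) (Sv k) - sum (xtf \<pi> (X k)) UNIV) * w i) \<longlonglongrightarrow> 0 + (0 - 0) * w i"
        by (intro tendsto_intros shl btl sxl)
      then show ?thesis using uu_Sv_decomp(2)[OF pis] by simp
    qed
    have Xl: "(\<lambda>k. X k i) \<longlonglongrightarrow> sum (X 0) UNIV / n" for i
    proof -
      have u: "uu \<pi> (X k) = (sum (X 0) UNIV - bt \<pi> (X k) (Sv k)) / n" for k
        using T[of k] n0 unfolding bt_def n_def by (simp add: field_simps)
      have "(\<lambda>k. xtf \<pi> (X k) i + (sum (X 0) UNIV - bt \<pi> (X k) (Sv k)) / n) \<longlonglongrightarrow> 0 + (sum (X 0) UNIV - 0) / n"
        by (intro tendsto_intros xtl btl) (use n0 in simp)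
      then show ?thesis using u by (simp add: xtf_def)
    qed
    show "(\<lambda>k. X k i) \<longlonglongrightarrow> sum (X 0) UNIV / real CARD('n)" for i using Xl unfolding n_def by blast
    show "(\<lambda>k. Sv k i) \<longlonglongrightarrow> 0" for i using Svl by blast
  qed
qed




definition Pm :: "('n::finite \<Rightarrow> 'n \<Rightarrow> real) \<Rightarrow> 'n \<Rightarrow> 'n \<Rightarrow> real" where
  "Pm a i j = (if i = j then 1 - (\<Sum>k\<in>UNIV. a i k) else 0) + a i j"
definition Sm :: "('n::finite \<Rightarrow> 'n \<Rightarrow> real) \<Rightarrow> 'n \<Rightarrow> 'n \<Rightarrow> real" where
  "Sm b h i = (if h = i then 1 - (\<Sum>k\<in>UNIV. b i k) else 0) + b i h"

lemma sum_Plus_UNIV: "sum g (UNIV :: ('a::finite + 'b::finite) set) = sum (\<lambda>i. g (Inl i)) UNIV + sum (\<lambda>i. g (Inr i)) UNIV"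
  using sum.Plus[of "UNIV::'a set" "UNIV::'b set" g] by (simp add: comp_def)

lemma sum_if_eq: "(\<Sum>j\<in>UNIV. (if (i::'n::finite) = j then c else 0) * x j) = c * (x i :: real)"
  by (subst sum.cong[OF refl, where h="\<lambda>j. if i = j then c * x i else 0"]) (auto simp: sum.delta')

lemma Mmat_step:
  fixes a b :: "'n::finite \<Rightarrow> 'n \<Rightarrow> real"
  shows "(Mmat a b \<epsilon> *v z) $ Inl i = mv (Pm a) (\<lambda>j. z $ Inl j) i + \<epsilon> * z $ Inr i"
    and "(Mmat a b \<epsilon> *v z) $ Inr i = z $ Inl i - mv (Pm a) (\<lambda>j. z $ Inl j) i
            + mv (Sm b) (\<lambda>j. z $ Inr j) i - \<epsilon> * z $ Inr i"
proof -
  have L: "lapl a $ i $ j = (if i = j then 1 else 0) - Pm a i j" for i j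
    by (simp add: lapl_def Pm_def)
  have I: "mat 1 $ i $ j - lapl a $ i $ j = Pm a i j" for i j
    by (simp add: L mat_def)
  have E2: "\<epsilon> * (mat 1 :: real^'n^'n) $ i $ j = (if i = j then \<epsilon> else 0)" for i j
    by (simp add: mat_def)
  have E: "(\<epsilon> *\<^sub>R (mat 1 :: real^'n^'n)) $ i $ j = (if i = j then \<epsilon> else 0)" for i j
    by (simp add: mat_def)
  have Sd: "(Smat b - \<epsilon> *\<^sub>R mat 1) $ i $ j = Sm b i j - (if i = j then \<epsilon> else 0)" for i j
    by (simp add: Smat_def Sm_def mat_def)
  show "(Mmat a b \<epsilon> *v z) $ Inl i = mv (Pm a) (\<lambda>j. z $ Inl j) i + \<epsilon> * z $ Inr i"
    by (simp add: matrix_vector_mult_def sum_Plus_UNIV Mmat_def I E E2 mv_def sum_if_eq)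
  have "(Mmat a b \<epsilon> *v z) $ Inr i = (\<Sum>j\<in>UNIV. ((if i = j then 1 else 0) - Pm a i j) * z $ Inl j)
        + (\<Sum>j\<in>UNIV. (Sm b i j - (if i = j then \<epsilon> else 0)) * z $ Inr j)"
    by (simp add: matrix_vector_mult_def sum_Plus_UNIV Mmat_def L E2 Smat_def Sm_def)
  also have "\<dots> = z $ Inl i - mv (Pm a) (\<lambda>j. z $ Inl j) i + mv (Sm b) (\<lambda>j. z $ Inr j) i - \<epsilon> * z $ Inr i"
    by (simp add: left_diff_distrib sum_subtractf mv_def sum_if_eq)
  finally show "(Mmat a b \<epsilon> *v z) $ Inr i = z $ Inl i - mv (Pm a) (\<lambda>j. z $ Inl j) i
            + mv (Sm b) (\<lambda>j. z $ Inr j) i - \<epsilon> * z $ Inr i" .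
qed

lemma traj_fun:
  fixes a b :: "'n::finite \<Rightarrow> 'n \<Rightarrow> real" and \<epsilon> :: real and x0 :: "real^'n"
  defines "X \<equiv> \<lambda>k i. traj (Mmat a b \<epsilon>) (stack x0 0) k $ Inl i"
    and "Sv \<equiv> \<lambda>k i. traj (Mmat a b \<epsilon>) (stack x0 0) k $ Inr i"
  shows "X 0 = (\<lambda>i. x0 $ i)" "Sv 0 = (\<lambda>_. 0)"
    "X (Suc k) = (\<lambda>i. mv (Pm a) (X k) i + \<epsilon> * Sv k i)"
    "Sv (Suc k) = (\<lambda>i. X k i - mv (Pm a) (X k) i + mv (Sm b) (Sv k) i - \<epsilon> * Sv k i)"
  unfolding X_def Sv_def by (auto simp: stack_def Mmat_step)

lemma traj_fun':
  fixes a b :: "'n::finite \<Rightarrow> 'n \<Rightarrow> real" and \<epsilon> :: real and x0 :: "real^'n"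
  assumes "X = (\<lambda>k i. traj (Mmat a b \<epsilon>) (stack x0 0) k $ Inl i)"
    and "Sv = (\<lambda>k i. traj (Mmat a b \<epsilon>) (stack x0 0) k $ Inr i)"
  shows "X 0 = (\<lambda>i. x0 $ i)" "Sv 0 = (\<lambda>_. 0)"
    "X (Suc k) = (\<lambda>i. mv (Pm a) (X k) i + \<epsilon> * Sv k i)"
    "Sv (Suc k) = (\<lambda>i. X k i - mv (Pm a) (X k) i + mv (Sm b) (Sv k) i - \<epsilon> * Sv k i)"
  unfolding assms by (rule traj_fun)+

lemma finite_pos_min: "(\<And>x. 0 < f (x::'a::finite)) \<Longrightarrow> \<exists>\<delta>>0. \<forall>x. \<delta> \<le> (f x :: real)"
proof -
  assume h: "\<And>x. 0 < f x"
  have "Min (range f) \<in> range f" by (rule Min_in) auto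
  then have "Min (range f) > 0" using h by auto
  moreover have "\<forall>x. Min (range f) \<le> f x" by auto
  ultimately show ?thesis by blast
qed

lemma q_bounds:
  assumes "real CARD('n::finite) * \<eta> \<le> 1" "0 < \<eta>" "0 < K"
  shows "0 \<le> 1 - real CARD('n) * \<eta> / real K" "1 - real CARD('n) * \<eta> / real K < 1"
proof -
  have "real K \<ge> 1" using assms(3) by simp
  then have "real CARD('n) * \<eta> \<le> real K" using assms(1) by linarith
  then show "0 \<le> 1 - real CARD('n) * \<eta> / real K" using assms(3) by (simp add: field_simps)
  show "1 - real CARD('n) * \<eta> / real K < 1" using assms(2,3) by simp
qed

lemma forward:
  fixes E :: "('n::finite \<times> 'n) set" and a b :: "'n \<Rightarrow> 'n \<Rightarrow> real"
  assumes nsl: "\<forall>i. (i, i) \<notin> E" and vw: "valid_weights E a b" and sc: "strongly_connected E"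
  shows "\<exists>\<epsilon>bar > 0. \<forall>\<epsilon>. 0 < \<epsilon> \<and> \<epsilon> < \<epsilon>bar \<longrightarrow> average_consensus a b \<epsilon>"
proof -
  have inI: "j \<in> in_nbrs E i \<longleftrightarrow> (j, i) \<in> E" for i j by (simp add: in_nbrs_def)
  have outI: "h \<in> out_nbrs E i \<longleftrightarrow> (i, h) \<in> E" for i h by (simp add: out_nbrs_def)
  have apos: "(j, i) \<in> E \<Longrightarrow> 0 < a i j" for i j using vw inI unfolding valid_weights_def by blast
  have a0: "(j, i) \<notin> E \<Longrightarrow> a i j = 0" for i j using vw inI unfolding valid_weights_def by blast
  have bpos: "(i, h) \<in> E \<Longrightarrow> 0 < b i h" for i h using vw outI unfolding valid_weights_def by blast
  have b0: "(i, h) \<notin> E \<Longrightarrow> b i h = 0" for i h using vw outI unfolding valid_weights_def by blast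
  have ann: "a i j \<ge> 0" for i j using apos a0 by (cases "(j, i) \<in> E") (auto simp: less_imp_le)
  have bnn: "b i j \<ge> 0" for i j using bpos b0 by (cases "(i, j) \<in> E") (auto simp: less_imp_le)
  have asum: "(\<Sum>k\<in>UNIV. a i k) < 1" for i
  proof -
    have "(\<Sum>k\<in>UNIV. a i k) = (\<Sum>k\<in>in_nbrs E i. a i k)"
      by (rule sum.mono_neutral_right) (auto simp: inI a0)
    then show ?thesis using vw unfolding valid_weights_def by simp
  qed
  have bsum: "(\<Sum>k\<in>UNIV. b i k) < 1" for i
  proof -
    have "(\<Sum>k\<in>UNIV. b i k) = (\<Sum>k\<in>out_nbrs E i. b i k)"
      by (rule sum.mono_neutral_right) (auto simp: outI b0)
    then show ?thesis using vw unfolding valid_weights_def by simp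
  qed
  define f where "f p = min (min (1 - (\<Sum>k\<in>UNIV. a (fst p) k)) (1 - (\<Sum>k\<in>UNIV. b (fst p) k)))
      (if (snd p, fst p) \<in> E then min (a (fst p) (snd p)) (b (snd p) (fst p)) else 1)" for p :: "'n \<times> 'n"
  have "0 < f p" for p using asum bsum apos bpos unfolding f_def by auto
  then obtain \<delta> where dp: "\<delta> > 0" and df: "\<And>p. \<delta> \<le> f p" using finite_pos_min[of f] by blast
  have da: "\<delta> \<le> 1 - (\<Sum>k\<in>UNIV. a i k)" for i using df[of "(i,i)"] unfolding f_def by simp
  have db: "\<delta> \<le> 1 - (\<Sum>k\<in>UNIV. b i k)" for i using df[of "(i,i)"] unfolding f_def by simp
  have dae: "(j, i) \<in> E \<Longrightarrow> \<delta> \<le> a i j" for i j using df[of "(i,j)"] unfolding f_def by simp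
  have dbe: "(j, i) \<in> E \<Longrightarrow> \<delta> \<le> b j i" for i j using df[of "(i,j)"] unfolding f_def by simp
  let ?P = "Pm a" and ?S = "Sm b" and ?T = "\<lambda>i j. Pm a j i"
  have Pnn: "?P i j \<ge> 0" for i j unfolding Pm_def using ann asum by (simp add: less_imp_le)
  have Prs: "(\<Sum>j\<in>UNIV. ?P i j) = 1" for i unfolding Pm_def by (simp add: sum.distrib)
  have Pdg: "?P i i \<ge> \<delta>" for i unfolding Pm_def using da[of i] ann[of i i] by simp
  have Ped: "(j, i) \<in> E \<Longrightarrow> ?P i j \<ge> \<delta>" for i j unfolding Pm_def using dae[of j i] asum[of i]
    by (auto simp: less_imp_le)
  have Snn: "?S i j \<ge> 0" for i j unfolding Sm_def using bnn bsum by (simp add: less_imp_le)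
  have Scs: "(\<Sum>i\<in>UNIV. ?S i j) = 1" for j unfolding Sm_def by (simp add: sum.distrib)
  have Sdg: "?S i i \<ge> \<delta>" for i unfolding Sm_def using db[of i] bnn[of i i] by simp
  have Sed: "(j, i) \<in> E \<Longrightarrow> ?S i j \<ge> \<delta>" for i j unfolding Sm_def using dbe[of j i] bsum[of j]
    by (auto simp: less_imp_le)
  have Tnn: "?T i j \<ge> 0" for i j by (rule Pnn)
  have Tcs: "(\<Sum>i\<in>UNIV. ?T i j) = 1" for j by (rule Prs)
  have Tdg: "?T i i \<ge> \<delta>" for i by (rule Pdg)
  have Ted: "(j, i) \<in> E\<inverse> \<Longrightarrow> ?T i j \<ge> \<delta>" for i j using Ped by simp
  have conn: "(i, j) \<in> E\<^sup>*" for i j using sc unfolding strongly_connected_def by blast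
  have connT: "(i, j) \<in> (E\<inverse>)\<^sup>*" for i j using conn[of j i] by (simp add: rtrancl_converse)
  obtain K1 \<eta>1 where K1: "0 < K1" and e1: "0 < \<eta>1" and G1: "\<And>i j. (mv ?P ^^ K1) (uvec j) i \<ge> \<eta>1"
    using pos_power[where Q="?P" and R=E, OF Pnn Pdg Ped dp conn] by blast
  obtain K2 \<eta>2 where K2: "0 < K2" and e2: "0 < \<eta>2" and G2: "\<And>i j. (mv ?S ^^ K2) (uvec j) i \<ge> \<eta>2"
    using pos_power[where Q="?S" and R=E, OF Snn Sdg Sed dp conn] by blast
  obtain K3 \<eta>3 where K3: "0 < K3" and e3: "0 < \<eta>3" and G3: "\<And>i j. (mv ?T ^^ K3) (uvec j) i \<ge> \<eta>3"
    using pos_power[where Q="?T" and R="E\<inverse>", OF Tnn Tdg Ted dp connT] by blast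
  define q1 where "q1 = 1 - real CARD('n) * \<eta>1 / real K1"
  define q2 where "q2 = 1 - real CARD('n) * \<eta>2 / real K2"
  have q1b: "0 \<le> q1" "q1 < 1" unfolding q1_def by (rule q_bounds[OF eta_bound_row[OF Prs G1] e1 K1])+
  have q2b: "0 \<le> q2" "q2 < 1" unfolding q2_def by (rule q_bounds[OF eta_bound_col[OF Scs G2] e2 K2])+
  have Pc: "NP ?P K1 (mv ?P x) \<le> q1 * NP ?P K1 x" for x
    unfolding q1_def by (rule row_contract[OF Pnn Prs K1 e1 G1])
  have Sc: "sum y UNIV = 0 \<Longrightarrow> NS ?S K2 (mv ?S y) \<le> q2 * NS ?S K2 y" for y
    unfolding q2_def by (rule col_contract[OF Snn Scs K2 e2 G2])
  obtain w where wp: "\<And>i. w i \<ge> \<eta>2" and ws: "sum w UNIV = 1" and Sw: "mv ?S w = w"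
    using perron_col[OF Snn Scs K2 e2 G2] by blast
  obtain \<pi> where pp: "\<And>i. \<pi> i \<ge> \<eta>3" and pis: "sum \<pi> UNIV = 1" and Tp: "mv ?T \<pi> = \<pi>"
    using perron_col[OF Tnn Tcs K3 e3 G3] by blast
  have piP: "(\<Sum>j\<in>UNIV. \<pi> j * ?P j i) = \<pi> i" for i
    using fun_cong[OF Tp, of i] by (simp add: mv_def mult.commute)
  have wnn: "w i \<ge> 0" for i using wp[of i] e2 by simp
  have pinn: "\<pi> i \<ge> 0" for i using pp[of i] e3 by simp
  have kap: "uu \<pi> w > 0" unfolding uu_def
  proof (rule sum_pos)
    show "0 < \<pi> i * w i" for i using pp[of i] wp[of i] e2 e3 by (simp add: mult_pos_pos)
  qed auto
  obtain eb where ebp: "eb > 0" and EB: "\<And>\<epsilon> X Sv. 0 < \<epsilon> \<and> \<epsilon> < eb \<and> Sv 0 = (\<lambda>_. 0)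
     \<and> (\<forall>k. X (Suc k) = (\<lambda>i. mv ?P (X k) i + \<epsilon> * Sv k i))
     \<and> (\<forall>k. Sv (Suc k) = (\<lambda>i. X k i - mv ?P (X k) i + mv ?S (Sv k) i - \<epsilon> * Sv k i))
     \<Longrightarrow> (\<forall>i. (\<lambda>k. X k i) \<longlonglongrightarrow> sum (X 0) UNIV / real CARD('n)) \<and> (\<forall>i. (\<lambda>k. Sv k i) \<longlonglongrightarrow> 0)"
    using main_conv[OF Pnn Prs Snn Scs K1 q1b Pc K2 q2b Sc pinn pis piP wnn ws Sw kap] by blast
  show ?thesis
  proof (intro exI[of _ eb] conjI allI impI ebp)
    fix \<epsilon> :: real assume e: "0 < \<epsilon> \<and> \<epsilon> < eb"
    show "average_consensus a b \<epsilon>" unfolding average_consensus_def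
    proof
      fix x0 :: "real^'n"
      define X where "X = (\<lambda>k i. traj (Mmat a b \<epsilon>) (stack x0 0) k $ Inl i)"
      define Sv where "Sv = (\<lambda>k i. traj (Mmat a b \<epsilon>) (stack x0 0) k $ Inr i)"
      note tf = traj_fun'[OF X_def Sv_def]
      have lims: "(\<forall>i. (\<lambda>k. X k i) \<longlonglongrightarrow> sum (X 0) UNIV / real CARD('n)) \<and> (\<forall>i. (\<lambda>k. Sv k i) \<longlonglongrightarrow> 0)"
        by (rule EB) (use e tf in auto)
      show "traj (Mmat a b \<epsilon>) (stack x0 0) \<longlonglongrightarrow> stack (((\<Sum>i\<in>UNIV. x0 $ i) / real CARD('n)) *\<^sub>R 1) 0"
      proof (rule vec_tendstoI)
        fix p :: "'n + 'n"
        show "(\<lambda>k. traj (Mmat a b \<epsilon>) (stack x0 0) k $ p) \<longlonglongrightarrow> stack (((\<Sum>i\<in>UNIV. x0 $ i) / real CARD('n)) *\<^sub>R 1) 0 $ p"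
        proof (cases p)
          case (Inl i)
          then show ?thesis using lims tf(1) unfolding X_def by (simp add: stack_def)
        next
          case (Inr i)
          then show ?thesis using lims unfolding Sv_def by (simp add: stack_def)
        qed
      qed
    qed
  qed
qed

lemma backward:
  fixes E :: "('n::finite \<times> 'n) set" and a b :: "'n \<Rightarrow> 'n \<Rightarrow> real"
  assumes vw: "valid_weights E a b" and nsc: "\<not> strongly_connected E"
    and ex: "\<exists>\<epsilon>bar > 0. \<forall>\<epsilon>. 0 < \<epsilon> \<and> \<epsilon> < \<epsilon>bar \<longrightarrow> average_consensus a b \<epsilon>"
  shows False
proof -
  obtain eb where ebp: "eb > 0" and H: "\<And>\<epsilon>. 0 < \<epsilon> \<and> \<epsilon> < eb \<Longrightarrow> average_consensus a b \<epsilon>"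
    using ex by blast
  define \<epsilon> where "\<epsilon> = eb / 2"
  have AC: "average_consensus a b \<epsilon>" using H ebp unfolding \<epsilon>_def by simp
  obtain i0 j0 where nr: "(i0, j0) \<notin> E\<^sup>*" using nsc unfolding strongly_connected_def by blast
  define C where "C = {i. (i, j0) \<in> E\<^sup>*}"
  have closed: "(j, i) \<in> E \<Longrightarrow> i \<in> C \<Longrightarrow> j \<in> C" for i j
    unfolding C_def by (auto intro: converse_rtrancl_into_rtrancl)
  have a0: "(j, i) \<notin> E \<Longrightarrow> a i j = 0" for i j using vw unfolding valid_weights_def in_nbrs_def by blast
  have b0: "(i, h) \<notin> E \<Longrightarrow> b i h = 0" for i h using vw unfolding valid_weights_def out_nbrs_def by blast
  define x0 :: "real^'n" where "x0 = (\<chi> i. if i \<in> C then 0 else 1)"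
  define X where "X = (\<lambda>k i. traj (Mmat a b \<epsilon>) (stack x0 0) k $ Inl i)"
  define Sv where "Sv = (\<lambda>k i. traj (Mmat a b \<epsilon>) (stack x0 0) k $ Inr i)"
  note tf = traj_fun'[OF X_def Sv_def]
  have zero: "\<forall>i\<in>C. X k i = 0 \<and> Sv k i = 0" for k
  proof (induction k)
    case 0 then show ?case using tf(1,2) unfolding x0_def by simp
  next
    case (Suc k)
    have mP: "mv (Pm a) (X k) i = 0" if "i \<in> C" for i
      unfolding mv_def
    proof (rule sum.neutral, intro ballI)
      fix j
      show "Pm a i j * X k j = 0"
      proof (cases "j \<in> C")
        case True then show ?thesis using Suc by simp
      next
        case False
        then have "i \<noteq> j" "(j, i) \<notin> E" using that closed by auto
        then show ?thesis using a0 by (simp add: Pm_def)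
      qed
    qed
    have mS: "mv (Sm b) (Sv k) i = 0" if "i \<in> C" for i
      unfolding mv_def
    proof (rule sum.neutral, intro ballI)
      fix j
      show "Sm b i j * Sv k j = 0"
      proof (cases "j \<in> C")
        case True then show ?thesis using Suc by simp
      next
        case False
        then have "i \<noteq> j" "(j, i) \<notin> E" using that closed by auto
        then show ?thesis using b0 by (simp add: Sm_def)
      qed
    qed
    show ?case using Suc mP mS tf(3,4) by simp
  qed
  have j0C: "j0 \<in> C" unfolding C_def by simp
  have i0C: "i0 \<notin> C" unfolding C_def using nr by simp
  define avg where "avg = (\<Sum>i\<in>UNIV. x0 $ i) / real CARD('n)"
  have "traj (Mmat a b \<epsilon>) (stack x0 0) \<longlonglongrightarrow> stack (avg *\<^sub>R 1) 0"
    using AC unfolding average_consensus_def avg_def by blast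
  then have "(\<lambda>k. traj (Mmat a b \<epsilon>) (stack x0 0) k $ Inl j0) \<longlonglongrightarrow> stack (avg *\<^sub>R 1) 0 $ Inl j0"
    by (rule tendsto_vec_nth)
  then have "(\<lambda>k. 0::real) \<longlonglongrightarrow> avg"
    using zero j0C unfolding X_def by (simp add: stack_def)
  then have av0: "avg = 0" using LIMSEQ_unique tendsto_const by blast
  have "1 \<le> (\<Sum>i\<in>UNIV. x0 $ i)"
  proof -
    have "x0 $ i0 \<le> (\<Sum>i\<in>UNIV. x0 $ i)" by (rule member_le_sum) (auto simp: x0_def)
    then show ?thesis using i0C by (simp add: x0_def)
  qed
  then have "avg > 0" unfolding avg_def by simp
  then show False using av0 by simp
qed

theorem theorem1:
  fixes E :: "('n::finite \<times> 'n) set"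
    and a b :: "'n \<Rightarrow> 'n \<Rightarrow> real"
  assumes "CARD('n) > 1"
    and "\<forall>i. (i, i) \<notin> E"
    and "valid_weights E a b"
  shows "strongly_connected E \<longleftrightarrow>
    (\<exists>\<epsilon>bar > 0. \<forall>\<epsilon>. 0 < \<epsilon> \<and> \<epsilon> < \<epsilon>bar \<longrightarrow> average_consensus a b \<epsilon>)"
  using forward[OF assms(2,3)] backward[OF assms(3)] by blast


end
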